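(* Let $G$ be a finite simple connected graph containing no cycle of length $3$ and no cycle of length $5$ as a subgraph. Suppose $\kappa>0$ is a real number such that $\kappa_{LLY}(x,y)\ge \kappa$ for every edge $xy$ of $G$. Then $$|V(G)|\le 2^{2/\kappa}.$$ Moreover, equality holds if and only if $G$ is isomorphic to the hypercube $Q_d$ and $\kappa=\frac{2}{d}$ for some positive integer $d$.
   Context: For vertices $u,v$ of a connected graph $G$, $d(u,v)$ is the graph distance, $N(v)$ is the neighborhood of $v$ and $d_v=|N(v)|$ its degree. For $0\le\alpha<1$ and a vertex $x$, the $\alpha$-lazy random walk is the probability distribution $m_x^\alpha$ on $V(G)$ with $m_x^\alpha(x)=\alpha$, $m_x^\alpha(v)=(1-\alpha)/d_x$ for $v\in N(x)$, and $m_x^\alpha(v)=0$ otherwise. For probability distributions $m_1,m_2$ on $V(G)$, a coupling is a map $A:V\times V\to[0,1]$ with $\sum_y A(x,y)=m_1(x)$ and $\sum_x A(x,y)=m_2(y)$, and the transportation distance is $W(m_1,m_2)=\inf_A\sum_{x,y}A(x,y)d(x,y)$ over all couplings $A$. For distinct vertices $x,y$, $\kappa_\alpha(x,y)=1-\frac{W(m_x^\alpha,m_y^\alpha)}{d(x,y)}$, and the Lin–Lu–Yau Ricci curvature is $\kappa_{LLY}(x,y)=\lim_{\alpha\to1}\frac{\kappa_\alpha(x,y)}{1-\alpha}$. The hypercube $Q_d$ is the graph on the subsets of $\{1,\dots,d\}$ in which two subsets are adjacent iff their symmetric difference has exactly one element. *)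

theory Defs
  imports Complex_Main
begin

definition simple_graph :: "'a set \<Rightarrow> ('a \<Rightarrow> 'a \<Rightarrow> bool) \<Rightarrow> bool" where
  "simple_graph V E \<longleftrightarrow> finite V \<and> (\<forall>x y. E x y \<longrightarrow> x \<in> V \<and> y \<in> V)
     \<and> (\<forall>x y. E x y \<longrightarrow> E y x) \<and> (\<forall>x. \<not> E x x)"

definition is_walk :: "('a \<Rightarrow> 'a \<Rightarrow> bool) \<Rightarrow> 'a \<Rightarrow> 'a \<Rightarrow> nat \<Rightarrow> 'a list \<Rightarrow> bool" where
  "is_walk E u v n xs \<longleftrightarrow> length xs = Suc n \<and> hd xs = u \<and> last xs = v
     \<and> (\<forall>i<n. E (xs ! i) (xs ! Suc i))"

definition connected_graph :: "'a set \<Rightarrow> ('a \<Rightarrow> 'a \<Rightarrow> bool) \<Rightarrow> bool" where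
  "connected_graph V E \<longleftrightarrow> V \<noteq> {} \<and> (\<forall>u\<in>V. \<forall>v\<in>V. \<exists>n xs. is_walk E u v n xs)"

definition gdist :: "('a \<Rightarrow> 'a \<Rightarrow> bool) \<Rightarrow> 'a \<Rightarrow> 'a \<Rightarrow> nat" where
  "gdist E u v = (LEAST n. \<exists>xs. is_walk E u v n xs)"

definition degree :: "'a set \<Rightarrow> ('a \<Rightarrow> 'a \<Rightarrow> bool) \<Rightarrow> 'a \<Rightarrow> nat" where
  "degree V E x = card {y \<in> V. E x y}"

definition lazy_rw :: "'a set \<Rightarrow> ('a \<Rightarrow> 'a \<Rightarrow> bool) \<Rightarrow> real \<Rightarrow> 'a \<Rightarrow> 'a \<Rightarrow> real" where
  "lazy_rw V E \<alpha> x v = (if v = x then \<alpha> else if E x v then (1 - \<alpha>) / real (degree V E x) else 0)"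

definition coupling :: "'a set \<Rightarrow> ('a \<Rightarrow> real) \<Rightarrow> ('a \<Rightarrow> real) \<Rightarrow> ('a \<Rightarrow> 'a \<Rightarrow> real) \<Rightarrow> bool" where
  "coupling V m1 m2 A \<longleftrightarrow> (\<forall>x\<in>V. \<forall>y\<in>V. 0 \<le> A x y \<and> A x y \<le> 1)
     \<and> (\<forall>x\<in>V. (\<Sum>y\<in>V. A x y) = m1 x) \<and> (\<forall>y\<in>V. (\<Sum>x\<in>V. A x y) = m2 y)"

definition transport :: "'a set \<Rightarrow> ('a \<Rightarrow> 'a \<Rightarrow> bool) \<Rightarrow> ('a \<Rightarrow> real) \<Rightarrow> ('a \<Rightarrow> real) \<Rightarrow> real" where
  "transport V E m1 m2 = Inf {(\<Sum>x\<in>V. \<Sum>y\<in>V. A x y * real (gdist E x y)) | A. coupling V m1 m2 A}"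

definition kappa_alpha :: "'a set \<Rightarrow> ('a \<Rightarrow> 'a \<Rightarrow> bool) \<Rightarrow> real \<Rightarrow> 'a \<Rightarrow> 'a \<Rightarrow> real" where
  "kappa_alpha V E \<alpha> x y = 1 - transport V E (lazy_rw V E \<alpha> x) (lazy_rw V E \<alpha> y) / real (gdist E x y)"

definition kappa_LLY :: "'a set \<Rightarrow> ('a \<Rightarrow> 'a \<Rightarrow> bool) \<Rightarrow> 'a \<Rightarrow> 'a \<Rightarrow> real" where
  "kappa_LLY V E x y = Lim (at_left 1) (\<lambda>\<alpha>. kappa_alpha V E \<alpha> x y / (1 - \<alpha>))"

definition no_C3 :: "('a \<Rightarrow> 'a \<Rightarrow> bool) \<Rightarrow> bool" where
  "no_C3 E \<longleftrightarrow> \<not> (\<exists>a b c. distinct [a, b, c] \<and> E a b \<and> E b c \<and> E c a)"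

definition no_C5 :: "('a \<Rightarrow> 'a \<Rightarrow> bool) \<Rightarrow> bool" where
  "no_C5 E \<longleftrightarrow> \<not> (\<exists>a b c d e. distinct [a, b, c, d, e]
      \<and> E a b \<and> E b c \<and> E c d \<and> E d e \<and> E e a)"

text \<open>Hypercube Q_d: vertices are subsets of {1..d}, adjacent iff symmetric difference has one element.\<close>
definition hypercube_adj :: "nat set \<Rightarrow> nat set \<Rightarrow> bool" where
  "hypercube_adj A B \<longleftrightarrow> card ((A - B) \<union> (B - A)) = 1"

definition iso_hypercube :: "'a set \<Rightarrow> ('a \<Rightarrow> 'a \<Rightarrow> bool) \<Rightarrow> nat \<Rightarrow> bool" where
  "iso_hypercube V E d \<longleftrightarrow> (\<exists>f. bij_betw f V (Pow {1..d})
      \<and> (\<forall>x\<in>V. \<forall>y\<in>V. E x y \<longleftrightarrow> hypercube_adj (f x) (f y)))"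

end

theory Submission
  imports Defs "HOL-Analysis.Generalised_Binomial_Theorem"
begin


lemma walk0: "(\<exists>xs. is_walk E u v 0 xs) \<longleftrightarrow> u = v"
proof
  assume "\<exists>xs. is_walk E u v 0 xs"
  then obtain xs where "is_walk E u v 0 xs" by blast
  then show "u = v" unfolding is_walk_def
    by (metis One_nat_def last_ConsL length_0_conv length_Suc_conv list.sel(1))
next
  assume "u = v" then show "\<exists>xs. is_walk E u v 0 xs"
    by (rule_tac x="[u]" in exI) (simp add: is_walk_def)
qed

lemma walk_Suc: "(\<exists>xs. is_walk E u v (Suc n) xs) \<longleftrightarrow> (\<exists>w. E u w \<and> (\<exists>xs. is_walk E w v n xs))"
proof
  assume "\<exists>xs. is_walk E u v (Suc n) xs"
  then obtain xs where w: "is_walk E u v (Suc n) xs" by blast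
  then obtain y ys where xs: "xs = y # ys" unfolding is_walk_def by (cases xs) auto
  have "is_walk E (hd ys) v n ys"
    using w xs unfolding is_walk_def
    by (auto simp: nth_Cons' split: if_splits)
  moreover have "E u (hd ys)" using w xs unfolding is_walk_def
    by (cases ys) auto
  ultimately show "\<exists>w. E u w \<and> (\<exists>xs. is_walk E w v n xs)" by blast
next
  assume "\<exists>w. E u w \<and> (\<exists>xs. is_walk E w v n xs)"
  then obtain w ys where "E u w" "is_walk E w v n ys" by blast
  then have "is_walk E u v (Suc n) (u # ys)" unfolding is_walk_def
    apply (cases ys) apply simp
    apply (auto simp: less_Suc_eq_0_disj)
    done
  then show "\<exists>xs. is_walk E u v (Suc n) xs" by blast
qed

definition walkn where "walkn E u v n \<longleftrightarrow> (\<exists>xs. is_walk E u v n xs)"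

lemma walkn0[simp]: "walkn E u v 0 \<longleftrightarrow> u = v" by (simp add: walkn_def walk0)
lemma walknSuc: "walkn E u v (Suc n) \<longleftrightarrow> (\<exists>w. E u w \<and> walkn E w v n)"
  by (simp add: walkn_def walk_Suc)

lemma walkn_append: "walkn E u w m \<Longrightarrow> walkn E w v n \<Longrightarrow> walkn E u v (m + n)"
  by (induction m arbitrary: u) (auto simp: walknSuc)

lemma walkn_snoc: "walkn E u w n \<Longrightarrow> E w v \<Longrightarrow> walkn E u v (Suc n)"
  using walkn_append[of E u w n v 1] by (simp add: walknSuc)

lemma walkn_rev: assumes "\<forall>x y. E x y \<longrightarrow> E y x" shows "walkn E u v n \<Longrightarrow> walkn E v u n"
proof (induction n arbitrary: u)
  case 0 then show ?case by simp
next
  case (Suc n)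
  then obtain w where "E u w" "walkn E w v n" by (auto simp: walknSuc)
  then show ?case using Suc.IH walkn_snoc assms by metis
qed

lemma gdist_walkn: "gdist E u v = (LEAST n. walkn E u v n)"
  by (simp add: gdist_def walkn_def)

locale sgraph =
  fixes V :: "'a set" and E :: "'a \<Rightarrow> 'a \<Rightarrow> bool"
  assumes sg: "simple_graph V E" and cg: "connected_graph V E"
begin

lemma finV: "finite V" using sg by (simp add: simple_graph_def)
lemma EV1: "E x y \<Longrightarrow> x \<in> V" using sg by (simp add: simple_graph_def)
lemma EV2: "E x y \<Longrightarrow> y \<in> V" using sg by (simp add: simple_graph_def)
lemma Esym: "E x y \<Longrightarrow> E y x" using sg by (simp add: simple_graph_def)
lemma Eirr[simp]: "\<not> E x x" using sg by (simp add: simple_graph_def)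
lemma Vne: "V \<noteq> {}" using cg by (simp add: connected_graph_def)

lemma walk_ex: "u \<in> V \<Longrightarrow> v \<in> V \<Longrightarrow> \<exists>n. walkn E u v n"
  using cg by (auto simp: connected_graph_def walkn_def)

lemma gdist_walk: "u \<in> V \<Longrightarrow> v \<in> V \<Longrightarrow> walkn E u v (gdist E u v)"
  unfolding gdist_walkn using walk_ex by (metis LeastI)

lemma gdist_le: "walkn E u v n \<Longrightarrow> gdist E u v \<le> n"
  unfolding gdist_walkn by (rule Least_le)

lemma gdist_self[simp]: "gdist E u u = 0"
  using gdist_le[of u u 0] by simp

lemma gdist_0: "u \<in> V \<Longrightarrow> v \<in> V \<Longrightarrow> gdist E u v = 0 \<longleftrightarrow> u = v"
  using gdist_walk[of u v] by auto

lemma gdist_sym: "gdist E u v = gdist E v u"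
proof -
  have *: "gdist E u v \<le> gdist E v u" for u v
  proof (cases "\<exists>n. walkn E v u n")
    case True
    then have "walkn E v u (gdist E v u)" unfolding gdist_walkn by (metis LeastI)
    then have "walkn E u v (gdist E v u)" using walkn_rev[of E] Esym by blast
    then show ?thesis by (rule gdist_le)
  next
    case False
    then have "\<not> (\<exists>n. walkn E u v n)" using walkn_rev[of E] Esym by blast
    then show ?thesis unfolding gdist_walkn using False by (simp add: Least_def)
  qed
  show ?thesis using *[of u v] *[of v u] by simp
qed

lemma gdist_edge: "E u v \<Longrightarrow> gdist E u v = 1"
proof -
  assume e: "E u v"
  have "walkn E u v 1" using e by (simp add: walknSuc)
  then have "gdist E u v \<le> 1" by (rule gdist_le)
  moreover have "gdist E u v \<noteq> 0" using gdist_0[of u v] e EV1 EV2 by force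
  ultimately show ?thesis by simp
qed

lemma gdist_tri: "u \<in> V \<Longrightarrow> w \<in> V \<Longrightarrow> v \<in> V \<Longrightarrow> gdist E u v \<le> gdist E u w + gdist E w v"
  using gdist_le walkn_append gdist_walk by metis

lemma gdist_1: "u \<in> V \<Longrightarrow> v \<in> V \<Longrightarrow> gdist E u v = 1 \<Longrightarrow> E u v"
  using gdist_walk[of u v] by (simp add: walknSuc)

lemma gdist_2: "u \<in> V \<Longrightarrow> v \<in> V \<Longrightarrow> gdist E u v = 2 \<Longrightarrow> \<exists>c. E u c \<and> E c v"
  using gdist_walk[of u v] by (simp add: walknSuc numeral_2_eq_2)

lemma gdist_adj: "E a b \<Longrightarrow> v \<in> V \<Longrightarrow> gdist E v b \<le> gdist E v a + 1"
  using gdist_tri[of v a b] gdist_edge[of a b] EV1 EV2 by fastforce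

lemma gdist_adj2: "E a b \<Longrightarrow> v \<in> V \<Longrightarrow> gdist E v a \<le> gdist E v b + 1"
  using gdist_adj[of b a v] Esym by blast

lemma gdist_pred: assumes "v \<in> V" "w \<in> V" "gdist E v w = Suc j"
  shows "\<exists>y. E w y \<and> gdist E v y = j"
proof -
  have "walkn E w v (Suc j)" using gdist_walk[of v w] assms walkn_rev[of E] Esym by metis
  then obtain y where y: "E w y" "walkn E y v j" by (auto simp: walknSuc)
  then have "gdist E v y \<le> j" using gdist_le gdist_sym by metis
  moreover have "Suc j \<le> gdist E v y + 1" using gdist_adj[of y w v] y Esym assms by simp
  ultimately show ?thesis using y by auto
qed

lemma gdist_ge2: "a \<in> V \<Longrightarrow> b \<in> V \<Longrightarrow> a \<noteq> b \<Longrightarrow> \<not> E a b \<Longrightarrow> gdist E a b \<ge> 2"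
  using gdist_0[of a b] gdist_1[of a b] by linarith

lemma gdist_lip: "a \<in> V \<Longrightarrow> b \<in> V \<Longrightarrow> v \<in> V \<Longrightarrow> real (gdist E v a) - real (gdist E v b) \<le> real (gdist E a b)"
  using gdist_tri[of v b a] gdist_sym[of a b] by simp

end


context sgraph begin

definition nbr where "nbr x = {a \<in> V. E x a}"

lemma fin_nbr: "finite (nbr x)" using finV by (simp add: nbr_def)

lemma deg_nbr: "degree V E x = card (nbr x)" by (simp add: degree_def nbr_def)

lemma deg_pos: "E x y \<Longrightarrow> degree V E x > 0"
  unfolding deg_nbr using fin_nbr[of x] EV2[of x y]
  by (metis (mono_tags, lifting) card_gt_0_iff empty_iff mem_Collect_eq nbr_def)

lemma sum_lazy:
  assumes "x \<in> V"
  shows "(\<Sum>v\<in>V. lazy_rw V E \<alpha> x v * g v)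
       = \<alpha> * g x + (1 - \<alpha>) / real (degree V E x) * (\<Sum>v\<in>nbr x. g v)"
proof -
  have "(\<Sum>v\<in>V. lazy_rw V E \<alpha> x v * g v)
     = (\<Sum>v\<in>V. (if v = x then \<alpha> * g v else 0) + (if E x v then (1 - \<alpha>) / real (degree V E x) * g v else 0))"
    by (rule sum.cong) (auto simp: lazy_rw_def)
  also have "\<dots> = \<alpha> * g x + (\<Sum>v\<in>V. (if E x v then (1 - \<alpha>) / real (degree V E x) * g v else 0))"
    using assms finV by (simp add: sum.distrib)
  also have "(\<Sum>v\<in>V. (if E x v then (1 - \<alpha>) / real (degree V E x) * g v else 0))
      = (\<Sum>v\<in>nbr x. (1 - \<alpha>) / real (degree V E x) * g v)"
    unfolding nbr_def by (simp only: sum.inter_filter[OF finV])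
  finally show ?thesis by (simp add: sum_distrib_left)
qed

lemma lazy_nonneg: "0 \<le> \<alpha> \<Longrightarrow> \<alpha> \<le> 1 \<Longrightarrow> 0 \<le> lazy_rw V E \<alpha> x v"
  by (simp add: lazy_rw_def)

lemma lazy_le1: "0 \<le> \<alpha> \<Longrightarrow> \<alpha> \<le> 1 \<Longrightarrow> E x y \<Longrightarrow> lazy_rw V E \<alpha> x v \<le> 1"
proof -
  assume a: "0 \<le> \<alpha>" "\<alpha> \<le> 1" "E x y"
  then have d: "real (degree V E x) \<ge> 1" using deg_pos[of x y] by simp
  have "(1 - \<alpha>) * 1 \<le> (1 - \<alpha>) * real (degree V E x)"
    by (rule mult_left_mono) (use d a in auto)
  then have "(1 - \<alpha>) / real (degree V E x) \<le> 1 - \<alpha>"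
    using d by (simp add: divide_le_eq)
  then show ?thesis using a by (auto simp: lazy_rw_def)
qed

lemma lazy_sum1: "E x y \<Longrightarrow> (\<Sum>v\<in>V. lazy_rw V E \<alpha> x v) = 1"
proof -
  assume e: "E x y"
  have "(\<Sum>v\<in>V. lazy_rw V E \<alpha> x v) = (\<Sum>v\<in>V. lazy_rw V E \<alpha> x v * 1)" by simp
  also have "\<dots> = \<alpha> + (1 - \<alpha>) / real (degree V E x) * real (card (nbr x))"
    using sum_lazy[of x \<alpha> "\<lambda>_. 1"] EV1[OF e] by simp
  also have "\<dots> = 1" using deg_pos[OF e] by (simp add: deg_nbr)
  finally show ?thesis .
qed

lemma lazy_supp: "lazy_rw V E \<alpha> x a \<noteq> 0 \<Longrightarrow> a \<in> insert x (nbr x)"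
  by (auto simp: lazy_rw_def nbr_def split: if_splits dest: EV2)

lemma coupling_ex:
  assumes "E x y" "E y z" "0 \<le> \<alpha>" "\<alpha> \<le> 1"
  shows "coupling V (lazy_rw V E \<alpha> x) (lazy_rw V E \<alpha> y) (\<lambda>a b. lazy_rw V E \<alpha> x a * lazy_rw V E \<alpha> y b)"
proof -
  let ?m1 = "lazy_rw V E \<alpha> x" and ?m2 = "lazy_rw V E \<alpha> y"
  have a: "0 \<le> ?m1 a * ?m2 b \<and> ?m1 a * ?m2 b \<le> 1" for a b
    using lazy_nonneg[OF assms(3,4)] lazy_le1[OF assms(3,4)] assms(1,2)
    by (meson mult_le_one mult_nonneg_nonneg)
  have b: "(\<Sum>b\<in>V. ?m1 a * ?m2 b) = ?m1 a" for a
    by (simp add: sum_distrib_left[symmetric] lazy_sum1[OF assms(2)])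
  have c: "(\<Sum>a\<in>V. ?m1 a * ?m2 b) = ?m2 b" for b
    by (simp add: sum_distrib_right[symmetric] lazy_sum1[OF assms(1)])
  show ?thesis unfolding coupling_def using a b c by blast
qed

definition cost where "cost A = (\<Sum>x\<in>V. \<Sum>y\<in>V. A x y * real (gdist E x y))"

lemma transport_cost: "transport V E m1 m2 = Inf {cost A | A. coupling V m1 m2 A}"
  by (simp add: transport_def cost_def)

lemma cost_nonneg: "coupling V m1 m2 A \<Longrightarrow> 0 \<le> cost A"
  unfolding cost_def coupling_def by (auto intro!: sum_nonneg)

lemma transport_le: "coupling V m1 m2 A \<Longrightarrow> transport V E m1 m2 \<le> cost A"
  unfolding transport_cost
  by (rule cInf_lower) (auto simp: bdd_below_def intro!: exI[of _ 0] cost_nonneg)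

lemma transport_ge:
  assumes ne: "coupling V m1 m2 A0"
    and lb: "\<And>A. coupling V m1 m2 A \<Longrightarrow> c \<le> cost A"
  shows "c \<le> transport V E m1 m2"
  unfolding transport_cost using ne lb by (intro cInf_greatest) auto

lemma cost_lb:
  assumes A: "coupling V m1 m2 A"
    and lip: "\<And>a b. a \<in> V \<Longrightarrow> b \<in> V \<Longrightarrow> m1 a \<noteq> 0 \<Longrightarrow> m2 b \<noteq> 0 \<Longrightarrow> f a - f b \<le> real (gdist E a b)"
  shows "(\<Sum>a\<in>V. m1 a * f a) - (\<Sum>b\<in>V. m2 b * f b) \<le> cost A"
proof -
  have nn: "\<And>a b. a \<in> V \<Longrightarrow> b \<in> V \<Longrightarrow> 0 \<le> A a b" using A by (simp add: coupling_def)
  have r: "\<And>a. a \<in> V \<Longrightarrow> (\<Sum>b\<in>V. A a b) = m1 a" and c: "\<And>b. b \<in> V \<Longrightarrow> (\<Sum>a\<in>V. A a b) = m2 b"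
    using A by (auto simp: coupling_def)
  have trm: "A a b * (f a - f b) \<le> A a b * real (gdist E a b)" if ab: "a \<in> V" "b \<in> V" for a b
  proof (cases "A a b = 0")
    case True then show ?thesis by simp
  next
    case False
    then have pos: "A a b > 0" using nn[OF ab] by simp
    have "A a b \<le> (\<Sum>b'\<in>V. A a b')" using ab nn finV by (intro member_le_sum) auto
    then have "m1 a \<noteq> 0" using r[OF ab(1)] pos by simp
    moreover have "A a b \<le> (\<Sum>a'\<in>V. A a' b)" using ab nn finV by (intro member_le_sum) auto
    then have "m2 b \<noteq> 0" using c[OF ab(2)] pos by simp
    ultimately show ?thesis using lip[OF ab] pos by (intro mult_left_mono) auto
  qed
  have s1: "(\<Sum>a\<in>V. \<Sum>b\<in>V. A a b * (f a - f b)) = (\<Sum>a\<in>V. \<Sum>b\<in>V. A a b * f a) - (\<Sum>a\<in>V. \<Sum>b\<in>V. A a b * f b)"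
    by (simp add: right_diff_distrib sum_subtractf)
  have s2: "(\<Sum>a\<in>V. \<Sum>b\<in>V. A a b * f a) = (\<Sum>a\<in>V. f a * (\<Sum>b\<in>V. A a b))"
    by (simp add: sum_distrib_left mult.commute)
  have s3: "(\<Sum>a\<in>V. \<Sum>b\<in>V. A a b * f b) = (\<Sum>b\<in>V. \<Sum>a\<in>V. A a b * f b)"
    by (rule sum.swap)
  have s4: "(\<Sum>b\<in>V. \<Sum>a\<in>V. A a b * f b) = (\<Sum>b\<in>V. f b * (\<Sum>a\<in>V. A a b))"
    by (simp add: sum_distrib_left mult.commute)
  have "(\<Sum>a\<in>V. \<Sum>b\<in>V. A a b * (f a - f b)) = (\<Sum>a\<in>V. f a * (\<Sum>b\<in>V. A a b)) - (\<Sum>b\<in>V. f b * (\<Sum>a\<in>V. A a b))"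
    using s1 s2 s3 s4 by simp
  also have "\<dots> = (\<Sum>a\<in>V. m1 a * f a) - (\<Sum>b\<in>V. m2 b * f b)"
    using r c by (simp add: mult.commute)
  finally have eq: "(\<Sum>a\<in>V. \<Sum>b\<in>V. A a b * (f a - f b)) = (\<Sum>a\<in>V. m1 a * f a) - (\<Sum>b\<in>V. m2 b * f b)" .
  have "(\<Sum>a\<in>V. \<Sum>b\<in>V. A a b * (f a - f b)) \<le> cost A"
    unfolding cost_def by (intro sum_mono) (use trm in auto)
  then show ?thesis using eq by simp
qed


abbreviation avg where "avg x f \<equiv> (\<Sum>a\<in>nbr x. f a) / real (degree V E x)"

lemma transport_lazy_lb:
  assumes e: "E x y" and al: "0 \<le> \<alpha>" "\<alpha> \<le> 1"
    and lip: "\<And>a b. a \<in> insert x (nbr x) \<Longrightarrow> b \<in> insert y (nbr y) \<Longrightarrow> f a - f b \<le> real (gdist E a b)"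
  shows "(\<alpha> * f x + (1 - \<alpha>) / real (degree V E x) * (\<Sum>a\<in>nbr x. f a))
       - (\<alpha> * f y + (1 - \<alpha>) / real (degree V E y) * (\<Sum>a\<in>nbr y. f a))
       \<le> transport V E (lazy_rw V E \<alpha> x) (lazy_rw V E \<alpha> y)"
proof -
  have A0: "coupling V (lazy_rw V E \<alpha> x) (lazy_rw V E \<alpha> y) (\<lambda>a b. lazy_rw V E \<alpha> x a * lazy_rw V E \<alpha> y b)"
    using coupling_ex[OF e Esym[OF e] al] .
  show ?thesis
  proof (rule transport_ge[OF A0])
    fix A assume A: "coupling V (lazy_rw V E \<alpha> x) (lazy_rw V E \<alpha> y) A"
    have lip': "f a - f b \<le> real (gdist E a b)" if "lazy_rw V E \<alpha> x a \<noteq> 0" "lazy_rw V E \<alpha> y b \<noteq> 0" for a b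
      using lip[OF lazy_supp[OF that(1)] lazy_supp[OF that(2)]] .
    have "(\<Sum>a\<in>V. lazy_rw V E \<alpha> x a * f a) - (\<Sum>b\<in>V. lazy_rw V E \<alpha> y b * f b) \<le> cost A"
      by (rule cost_lb[OF A lip'])
    moreover note h1 = sum_lazy[OF EV1[OF e], of \<alpha> f] and h2 = sum_lazy[OF EV2[OF e], of \<alpha> f]
    ultimately show "(\<alpha> * f x + (1 - \<alpha>) / real (degree V E x) * (\<Sum>a\<in>nbr x. f a))
       - (\<alpha> * f y + (1 - \<alpha>) / real (degree V E y) * (\<Sum>a\<in>nbr y. f a)) \<le> cost A"
      by linarith
  qed
qed

lemma kappa_alpha_ub:
  assumes e: "E x y" and al: "0 \<le> \<alpha>" "\<alpha> \<le> 1"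
    and lip: "\<And>a b. a \<in> insert x (nbr x) \<Longrightarrow> b \<in> insert y (nbr y) \<Longrightarrow> f a - f b \<le> real (gdist E a b)"
    and f1: "f x - f y = 1"
  shows "kappa_alpha V E \<alpha> x y \<le> (1 - \<alpha>) * (1 - avg x f + avg y f)"
proof -
  have "kappa_alpha V E \<alpha> x y = 1 - transport V E (lazy_rw V E \<alpha> x) (lazy_rw V E \<alpha> y)"
    by (simp add: kappa_alpha_def gdist_edge[OF e])
  also have "\<dots> \<le> 1 - ((\<alpha> * f x + (1 - \<alpha>) / real (degree V E x) * (\<Sum>a\<in>nbr x. f a))
       - (\<alpha> * f y + (1 - \<alpha>) / real (degree V E y) * (\<Sum>a\<in>nbr y. f a)))"
    using transport_lazy_lb[OF e al lip] by simp
  also have "\<dots> = (1 - \<alpha>) * (1 - avg x f + avg y f)"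
    using f1 by (simp add: algebra_simps)
  finally show ?thesis .
qed

lemma lazy_mix:
  assumes "\<alpha> < 1" "lam = (1 - \<beta>) / (1 - \<alpha>)"
  shows "lazy_rw V E \<beta> x a = lam * lazy_rw V E \<alpha> x a + (1 - lam) * (if a = x then 1 else 0)"
proof -
  have l: "lam * (1 - \<alpha>) = 1 - \<beta>" using assms by simp
  show ?thesis
  proof (cases "a = x")
    case True then show ?thesis using l by (simp add: lazy_rw_def algebra_simps)
  next
    case False then show ?thesis using l by (auto simp: lazy_rw_def)
  qed
qed

lemma W_conv:
  assumes e: "E x y" and ab: "0 \<le> \<alpha>" "\<alpha> \<le> \<beta>" "\<beta> < 1"
  defines "lam \<equiv> (1 - \<beta>) / (1 - \<alpha>)"
  shows "transport V E (lazy_rw V E \<beta> x) (lazy_rw V E \<beta> y)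
     \<le> lam * transport V E (lazy_rw V E \<alpha> x) (lazy_rw V E \<alpha> y) + (1 - lam)"
proof -
  have lp: "0 < lam" "lam \<le> 1" using ab by (auto simp: lam_def)
  have xV: "x \<in> V" and yV: "y \<in> V" using e EV1 EV2 by auto
  let ?T = "transport V E (lazy_rw V E \<beta> x) (lazy_rw V E \<beta> y)"
  have A0: "coupling V (lazy_rw V E \<alpha> x) (lazy_rw V E \<alpha> y) (\<lambda>a b. lazy_rw V E \<alpha> x a * lazy_rw V E \<alpha> y b)"
    using coupling_ex[OF e Esym[OF e]] ab by simp
  have "(?T - (1 - lam)) / lam \<le> transport V E (lazy_rw V E \<alpha> x) (lazy_rw V E \<alpha> y)"
  proof (rule transport_ge[OF A0])
    fix A assume A: "coupling V (lazy_rw V E \<alpha> x) (lazy_rw V E \<alpha> y) A"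
    define B where "B = (\<lambda>a b. if a = x \<and> b = y then (1::real) else 0)"
    define C where "C = (\<lambda>a b. lam * A a b + (1 - lam) * B a b)"
    have Bs1: "(\<Sum>b\<in>V. B a b) = (if a = x then 1 else 0)" for a
      using yV finV by (simp add: B_def)
    have Bs2: "(\<Sum>a\<in>V. B a b) = (if b = y then 1 else 0)" for b
      using xV finV by (simp add: B_def)
    have C: "coupling V (lazy_rw V E \<beta> x) (lazy_rw V E \<beta> y) C"
      unfolding coupling_def
    proof (intro conjI ballI)
      fix a b assume "a \<in> V" "b \<in> V"
      then have "0 \<le> A a b" "A a b \<le> 1" using A by (auto simp: coupling_def)
      moreover have "0 \<le> B a b" "B a b \<le> 1" by (auto simp: B_def)
      ultimately show "0 \<le> C a b" "C a b \<le> 1" using lp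
        by (auto simp: C_def intro!: add_nonneg_nonneg mult_nonneg_nonneg convex_bound_le[of "A a b" 1 "B a b" lam "1 - lam", simplified])
    next
      fix a assume a: "a \<in> V"
      have "(\<Sum>b\<in>V. C a b) = lam * (\<Sum>b\<in>V. A a b) + (1 - lam) * (\<Sum>b\<in>V. B a b)"
        by (simp add: C_def sum.distrib sum_distrib_left)
      also have "\<dots> = lazy_rw V E \<beta> x a"
        using A a Bs1 lazy_mix[of \<alpha> lam \<beta> x a] ab by (simp add: coupling_def lam_def)
      finally show "(\<Sum>b\<in>V. C a b) = lazy_rw V E \<beta> x a" .
    next
      fix b assume b: "b \<in> V"
      have "(\<Sum>a\<in>V. C a b) = lam * (\<Sum>a\<in>V. A a b) + (1 - lam) * (\<Sum>a\<in>V. B a b)"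
        by (simp add: C_def sum.distrib sum_distrib_left)
      also have "\<dots> = lazy_rw V E \<beta> y b"
        using A b Bs2 lazy_mix[of \<alpha> lam \<beta> y b] ab by (simp add: coupling_def lam_def)
      finally show "(\<Sum>a\<in>V. C a b) = lazy_rw V E \<beta> y b" .
    qed
    have cB: "(\<Sum>a\<in>V. \<Sum>b\<in>V. B a b * real (gdist E a b)) = 1"
    proof -
      have "(\<Sum>a\<in>V. \<Sum>b\<in>V. B a b * real (gdist E a b)) = (\<Sum>a\<in>V. if a = x then real (gdist E x y) else 0)"
      proof (rule sum.cong)
        fix a assume "a \<in> V"
        have "B a b * real (gdist E a b) = (if a = x then (if b = y then real (gdist E x y) else 0) else 0)" for b
          by (simp add: B_def)
        then show "(\<Sum>b\<in>V. B a b * real (gdist E a b)) = (if a = x then real (gdist E x y) else 0)"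
          using yV finV by simp
      qed simp
      also have "\<dots> = 1" using xV finV gdist_edge[OF e] by simp
      finally show ?thesis .
    qed
    have "cost C = (\<Sum>a\<in>V. \<Sum>b\<in>V. lam * (A a b * real (gdist E a b)) + (1 - lam) * (B a b * real (gdist E a b)))"
      unfolding cost_def C_def by (simp add: distrib_right mult.assoc)
    also have "\<dots> = lam * cost A + (1 - lam) * (\<Sum>a\<in>V. \<Sum>b\<in>V. B a b * real (gdist E a b))"
      unfolding cost_def by (simp add: sum.distrib sum_distrib_left)
    finally have "cost C = lam * cost A + (1 - lam)" using cB by simp
    then have "?T \<le> lam * cost A + (1 - lam)" using transport_le[OF C] by simp
    then show "(?T - (1 - lam)) / lam \<le> cost A" using lp by (simp add: divide_le_eq algebra_simps)
  qed
  then show ?thesis using lp by (simp add: divide_le_eq algebra_simps)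
qed


lemma kappa_alpha_eq: "E x y \<Longrightarrow> kappa_alpha V E \<alpha> x y = 1 - transport V E (lazy_rw V E \<alpha> x) (lazy_rw V E \<alpha> y)"
  by (simp add: kappa_alpha_def gdist_edge)

lemma g_mono:
  assumes e: "E x y" and ab: "0 \<le> \<alpha>" "\<alpha> \<le> \<beta>" "\<beta> < 1"
  shows "kappa_alpha V E \<alpha> x y / (1 - \<alpha>) \<le> kappa_alpha V E \<beta> x y / (1 - \<beta>)"
proof -
  define lam where "lam = (1 - \<beta>) / (1 - \<alpha>)"
  let ?Ta = "transport V E (lazy_rw V E \<alpha> x) (lazy_rw V E \<alpha> y)"
  let ?Tb = "transport V E (lazy_rw V E \<beta> x) (lazy_rw V E \<beta> y)"
  have W: "?Tb \<le> lam * ?Ta + (1 - lam)" using W_conv[OF e ab] by (simp add: lam_def)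
  have "(1 - ?Ta) / (1 - \<alpha>) = lam * (1 - ?Ta) / (1 - \<beta>)"
    using ab unfolding lam_def by simp
  also have "\<dots> \<le> (1 - ?Tb) / (1 - \<beta>)"
    using W ab by (intro divide_right_mono) (auto simp: algebra_simps)
  finally show ?thesis by (simp add: kappa_alpha_eq[OF e])
qed

lemma kappa_LLY_ub:
  assumes e: "E x y"
    and lip: "\<And>a b. a \<in> insert x (nbr x) \<Longrightarrow> b \<in> insert y (nbr y) \<Longrightarrow> f a - f b \<le> real (gdist E a b)"
    and f1: "f x - f y = 1"
  shows "kappa_LLY V E x y \<le> 1 - avg x f + avg y f"
proof -
  define g where "g = (\<lambda>\<alpha>. kappa_alpha V E \<alpha> x y / (1 - \<alpha>))"
  define C where "C = 1 - avg x f + avg y f"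
  have bd: "g \<alpha> \<le> C" if "0 \<le> \<alpha>" "\<alpha> < 1" for \<alpha>
    using kappa_alpha_ub[OF e that(1) _ lip f1] that by (simp add: g_def C_def divide_le_eq mult.commute)
  have mo: "g \<alpha> \<le> g \<beta>" if "0 \<le> \<alpha>" "\<alpha> \<le> \<beta>" "\<beta> < 1" for \<alpha> \<beta>
    using g_mono[OF e that] by (simp add: g_def)
  define L where "L = Sup (g ` {0..<1})"
  have ne: "g ` {0..<1} \<noteq> {}" by simp
  have bda: "bdd_above (g ` {0..<1})" by (rule bdd_aboveI[of _ C]) (use bd in auto)
  have LC: "L \<le> C" unfolding L_def using bd by (intro cSup_least) auto
  have lim: "(g \<longlongrightarrow> L) (at_left 1)"
  proof (rule order_tendstoI)
    fix a assume "a < L"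
    then obtain a0 where a0: "a0 \<in> {0..<1}" "a < g a0"
      using less_cSup_iff[OF ne bda] by (auto simp: L_def)
    have "\<forall>\<^sub>F t in at_left 1. t \<in> {a0<..<1}" using a0 by (intro eventually_at_left_real) auto
    then show "\<forall>\<^sub>F t in at_left 1. a < g t"
    proof eventually_elim
      case (elim t)
      then have "g a0 \<le> g t" using a0 by (intro mo) auto
      then show ?case using a0 by simp
    qed
  next
    fix a assume "L < a"
    have "\<forall>\<^sub>F t in at_left (1::real). t \<in> {0<..<1}" by (intro eventually_at_left_real) auto
    then show "\<forall>\<^sub>F t in at_left 1. g t < a"
    proof eventually_elim
      case (elim t)
      then have "g t \<le> L" unfolding L_def using bda by (intro cSup_upper) auto
      then show ?case using \<open>L < a\<close> by simp
    qed
  qed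
  have "kappa_LLY V E x y = L"
    unfolding kappa_LLY_def using lim by (intro tendsto_Lim) (auto simp: g_def)
  then show ?thesis using LC by (simp add: C_def)
qed

end


lemma sum_if_card:
  fixes c1 c2 :: real
  assumes "finite A" "\<And>a. a \<in> A \<Longrightarrow> f a = (if P a then c1 else c2)"
  shows "(\<Sum>a\<in>A. f a) = c2 * real (card A) + (c1 - c2) * real (card {a\<in>A. P a})"
proof -
  have "(\<Sum>a\<in>A. f a) = (\<Sum>a\<in>A. c2 + (if P a then c1 - c2 else 0))"
    using assms(2) by (intro sum.cong) auto
  also have "\<dots> = c2 * real (card A) + (\<Sum>a\<in>A. if P a then c1 - c2 else 0)"
    by (simp add: sum.distrib)
  also have "(\<Sum>a\<in>A. if P a then c1 - c2 else 0) = (\<Sum>a\<in>{a\<in>A. P a}. c1 - c2)"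
    using sum.inter_filter[OF assms(1), of "\<lambda>_. c1 - c2" P] by simp
  finally show ?thesis by simp
qed

locale sg35 = sgraph +
  assumes c3: "no_C3 E" and c5: "no_C5 E"
begin

lemma tri: "E a b \<Longrightarrow> E b c \<Longrightarrow> E c a \<Longrightarrow> False"
  using c3 unfolding no_C3_def by (metis Eirr distinct_length_2_or_more distinct_singleton)

lemma pent: "E a b \<Longrightarrow> E b c \<Longrightarrow> E c d \<Longrightarrow> E d e \<Longrightarrow> E e a \<Longrightarrow> distinct [a,b,c,d,e] \<Longrightarrow> False"
  using c5 unfolding no_C5_def by blast

definition ind where "ind v w = card {a \<in> V. E w a \<and> gdist E v a + 1 = gdist E v w}"
definition outd where "outd v w = card {a \<in> V. E w a \<and> gdist E v a = gdist E v w + 1}"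

lemma key_edge:
  assumes vV: "v \<in> V" and e: "E w y" and dw: "gdist E v w = Suc j" and dy: "gdist E v y = j"
  shows "kappa_LLY V E w y \<le> 2 * real (ind v w) / real (degree V E w) - 2 * real (ind v y) / real (degree V E y)"
proof -
  have wV: "w \<in> V" and yV: "y \<in> V" using e EV1 EV2 by auto
  define J where "J = real (Suc j)"
  define D where "D = (\<lambda>z. real (gdist E v z))"
  define f where "f = (\<lambda>z. if E w z \<and> Suc j \<le> gdist E v z then J + 1
      else if E y z \<and> Suc j \<le> gdist E v z + 1 then J else D z)"
  have adj: "\<And>a b. E a b \<Longrightarrow> gdist E v b \<le> gdist E v a + 1 \<and> gdist E v a \<le> gdist E v b + 1"
    using gdist_adj gdist_adj2 vV by blast
  have fw: "f w = J" using e Esym dw by (auto simp: f_def)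
  have fy: "f y = j" using e dy by (auto simp: f_def D_def)
  have f1: "f w - f y = 1" using fw fy by (simp add: J_def)
  have fb: "D b \<le> f b" if b: "b \<in> insert y (nbr y)" for b
  proof -
    have "gdist E v b \<le> Suc j" using b adj[of y b] dy by (auto simp: nbr_def)
    moreover have "E w b \<Longrightarrow> gdist E v b \<le> Suc j + 1" using adj[of w b] dw by simp
    ultimately show ?thesis by (auto simp: f_def D_def J_def)
  qed
  have lip: "f a - f b \<le> real (gdist E a b)" if a: "a \<in> insert w (nbr w)" and b: "b \<in> insert y (nbr y)" for a b
  proof -
    have aV: "a \<in> V" and bV: "b \<in> V" using a b wV yV by (auto simp: nbr_def)
    show ?thesis
    proof (cases "E w a \<and> Suc j \<le> gdist E v a")
      case False
      have "f a \<le> D a"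
      proof (cases "a = w")
        case True then show ?thesis using fw dw by (simp add: D_def J_def)
      next
        case aw: False
        then have "E w a" using a by (auto simp: nbr_def)
        then have "\<not> E y a" using tri e Esym by blast
        then show ?thesis unfolding f_def using False by auto
      qed
      then show ?thesis using fb[OF b] gdist_lip[OF aV bV vV] by (simp add: D_def)
    next
      case True
      then have ewa: "E w a" and Da: "Suc j \<le> gdist E v a" by auto
      have fa: "f a = J + 1" using True by (simp add: f_def)
      have nay: "\<not> E a y" using tri[of w a y] ewa e Esym by blast
      have "a \<noteq> y" using Da dy by auto
      show ?thesis
      proof (cases "b = y")
        case True
        have "2 \<le> gdist E a y" using gdist_ge2[OF aV yV \<open>a \<noteq> y\<close> nay] .
        then show ?thesis using True fa fy by (simp add: J_def)
      next
        case bny: False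
        then have eyb: "E y b" using b by (auto simp: nbr_def)
        show ?thesis
        proof (cases "b = w")
          case True then show ?thesis using fa fw gdist_edge[OF ewa] Esym by (simp add: gdist_sym)
        next
          case bw: False
          have "a \<noteq> b" using tri[of w a y] ewa eyb e Esym by blast
          then have g1: "1 \<le> gdist E a b" using gdist_0[OF aV bV] by simp
          show ?thesis
          proof (cases "Suc j \<le> gdist E v b + 1")
            case True
            then have "f b \<ge> J" by (auto simp: f_def eyb)
            then show ?thesis using fa g1 by simp
          next
            case False
            have Db: "gdist E v b + 2 = Suc j" using False adj[OF eyb] dy by simp
            have nwb: "\<not> E w b" using adj[of w b] dw Db by auto
            have fbv: "f b = D b" using False nwb by (simp add: f_def)
            have g2: "gdist E a b \<ge> 2" using gdist_lip[OF aV bV vV] Da Db by simp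
            have "gdist E a b \<noteq> 2"
            proof
              assume "gdist E a b = 2"
              then obtain c where ac: "E a c" and cb: "E c b" using gdist_2[OF aV bV] by blast
              have "c \<noteq> w" using cb nwb by auto
              moreover have "c \<noteq> y" using ac nay by auto
              moreover have "a \<noteq> w" "b \<noteq> c" "a \<noteq> c" "w \<noteq> y" "y \<noteq> b" using ewa cb ac e eyb by auto
              moreover have "a \<noteq> b" "w \<noteq> b" using Da Db dw by auto
              ultimately have "distinct [a, w, y, b, c]" using \<open>a \<noteq> y\<close> by auto
              then show False using pent[of a w y b c] Esym ewa e eyb cb ac by blast
            qed
            then have "gdist E a b \<ge> 3" using g2 by simp
            then show ?thesis using fa fbv Db by (simp add: D_def J_def)
          qed
        qed
      qed
    qed
  qed
  have sw: "(\<Sum>a\<in>nbr w. f a) = (J + 1) * real (degree V E w) + ((J - 1) - (J + 1)) * real (ind v w)"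
  proof -
    have "(\<Sum>a\<in>nbr w. f a) = (J + 1) * real (card (nbr w)) + ((J - 1) - (J + 1)) * real (card {a\<in>nbr w. gdist E v a + 1 = gdist E v w})"
    proof (rule sum_if_card[OF fin_nbr])
      fix a assume a: "a \<in> nbr w"
      then have ewa: "E w a" by (simp add: nbr_def)
      have "\<not> E y a" using tri ewa e Esym by blast
      then show "f a = (if gdist E v a + 1 = gdist E v w then J - 1 else J + 1)"
        using adj[OF ewa] dw ewa by (auto simp: f_def D_def J_def)
    qed
    moreover have "{a\<in>nbr w. gdist E v a + 1 = gdist E v w} = {a \<in> V. E w a \<and> gdist E v a + 1 = gdist E v w}"
      by (auto simp: nbr_def)
    ultimately show ?thesis by (simp add: ind_def deg_nbr)
  qed
  have sy: "(\<Sum>a\<in>nbr y. f a) = J * real (degree V E y) + ((J - 2) - J) * real (ind v y)"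
  proof -
    have "(\<Sum>a\<in>nbr y. f a) = J * real (card (nbr y)) + ((J - 2) - J) * real (card {a\<in>nbr y. gdist E v a + 1 = gdist E v y})"
    proof (rule sum_if_card[OF fin_nbr])
      fix a assume a: "a \<in> nbr y"
      then have eya: "E y a" by (simp add: nbr_def)
      have "\<not> E w a" using tri eya e Esym by blast
      then show "f a = (if gdist E v a + 1 = gdist E v y then J - 2 else J)"
        using adj[OF eya] dy eya by (auto simp: f_def D_def J_def)
    qed
    moreover have "{a\<in>nbr y. gdist E v a + 1 = gdist E v y} = {a \<in> V. E y a \<and> gdist E v a + 1 = gdist E v y}"
      by (auto simp: nbr_def)
    ultimately show ?thesis by (simp add: ind_def deg_nbr)
  qed
  have dwp: "real (degree V E w) > 0" and dyp: "real (degree V E y) > 0"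
    using deg_pos[OF e] deg_pos[OF Esym[OF e]] by auto
  have "kappa_LLY V E w y \<le> 1 - avg w f + avg y f"
    by (rule kappa_LLY_ub[OF e lip f1])
  also have "1 - avg w f + avg y f = 2 * real (ind v w) / real (degree V E w) - 2 * real (ind v y) / real (degree V E y)"
    unfolding sw sy using dwp dyp by (simp add: field_simps)
  finally show ?thesis .
qed

end


lemma gchoose_step: "(a::real) gchoose (Suc k) = (a gchoose k) * (a - real k) / real (Suc k)"
proof -
  have "real (Suc k) * (a gchoose Suc k) = (a - real k) * (a gchoose k)"
    using gbinomial_absorption[of k a] gbinomial_absorb_comp[of a k] by simp
  then show ?thesis by (simp add: field_simps del: of_nat_Suc)
qed

definition Fb where "Fb x = (\<Sum>k\<le>nat \<lfloor>x\<rfloor>. (x gchoose k))"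

locale sgk = sg35 +
  fixes \<kappa> :: real
  assumes kpos: "\<kappa> > 0" and kLLY: "\<And>x y. E x y \<Longrightarrow> \<kappa> \<le> kappa_LLY V E x y"
begin

lemma ind_le_deg: "ind v w + outd v w \<le> degree V E w"
proof -
  have "ind v w + outd v w = card ({a \<in> V. E w a \<and> gdist E v a + 1 = gdist E v w} \<union> {a \<in> V. E w a \<and> gdist E v a = gdist E v w + 1})"
    unfolding ind_def outd_def using finV by (intro card_Un_disjoint[symmetric]) auto
  also have "\<dots> \<le> card (nbr w)" using fin_nbr by (intro card_mono) (auto simp: nbr_def)
  finally show ?thesis by (simp add: deg_nbr)
qed

lemma ind_lb:
  assumes vV: "v \<in> V"
  shows "w \<in> V \<Longrightarrow> real (gdist E v w) * \<kappa> / 2 * real (degree V E w) \<le> real (ind v w)"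
proof (induction "gdist E v w" arbitrary: w)
  case 0 then show ?case by simp
next
  case (Suc j)
  obtain y where e: "E w y" and dy: "gdist E v y = j" using gdist_pred[OF vV Suc.prems Suc.hyps(2)[symmetric]] by blast
  have yV: "y \<in> V" using EV2[OF e] .
  have IH: "real j * \<kappa> / 2 * real (degree V E y) \<le> real (ind v y)" using Suc.hyps(1)[OF dy[symmetric] yV] dy by simp
  have dwp: "real (degree V E w) > 0" and dyp: "real (degree V E y) > 0"
    using deg_pos[OF e] deg_pos[OF Esym[OF e]] by auto
  have k: "\<kappa> \<le> 2 * real (ind v w) / real (degree V E w) - 2 * real (ind v y) / real (degree V E y)"
    using kLLY[OF e] key_edge[OF vV e Suc.hyps(2)[symmetric] dy] by linarith
  have "real j * \<kappa> / 2 \<le> real (ind v y) / real (degree V E y)" using IH dyp by (simp add: le_divide_eq)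
  then have "real (Suc j) * \<kappa> / 2 \<le> real (ind v w) / real (degree V E w)" using k by (simp add: algebra_simps)
  then show ?case using dwp Suc.hyps(2) by (simp add: le_divide_eq)
qed

definition S where "S v k = {w \<in> V. gdist E v w = k}"
definition vol where "vol v k = (\<Sum>w\<in>S v k. real (degree V E w))"

lemma finS: "finite (S v k)" using finV by (simp add: S_def)

lemma card_filter_sum: "finite A \<Longrightarrow> real (card {a \<in> A. P a}) = (\<Sum>a\<in>A. if P a then 1 else 0)"
  by (simp add: sum.inter_filter[symmetric])

lemma double_count: "(\<Sum>u\<in>S v k. real (outd v u)) = (\<Sum>w\<in>S v (Suc k). real (ind v w))"
proof -
  have o: "real (outd v u) = (\<Sum>w\<in>S v (Suc k). if E u w then 1 else 0)" if "u \<in> S v k" for u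
  proof -
    have "{a \<in> V. E u a \<and> gdist E v a = gdist E v u + 1} = {a \<in> S v (Suc k). E u a}"
      using that by (auto simp: S_def)
    then show ?thesis unfolding outd_def by (simp add: card_filter_sum[OF finS])
  qed
  have i: "real (ind v w) = (\<Sum>u\<in>S v k. if E u w then 1 else 0)" if "w \<in> S v (Suc k)" for w
  proof -
    have "{a \<in> V. E w a \<and> gdist E v a + 1 = gdist E v w} = {a \<in> S v k. E a w}"
      using that by (auto simp: S_def intro: Esym)
    then show ?thesis unfolding ind_def by (simp add: card_filter_sum[OF finS])
  qed
  have "(\<Sum>u\<in>S v k. real (outd v u)) = (\<Sum>u\<in>S v k. \<Sum>w\<in>S v (Suc k). if E u w then 1 else 0)"
    using o by (rule sum.cong[OF refl])
  also have "\<dots> = (\<Sum>w\<in>S v (Suc k). \<Sum>u\<in>S v k. if E u w then 1 else 0)"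
    by (rule sum.swap)
  also have "\<dots> = (\<Sum>w\<in>S v (Suc k). real (ind v w))"
    using i by (intro sum.cong[OF refl]) simp
  finally show ?thesis .
qed

lemma layer_bound:
  assumes vV: "v \<in> V" and w: "w \<in> S v k" and k: "k \<ge> 1"
  shows "real k \<le> 2 / \<kappa>"
proof -
  have wV: "w \<in> V" and dw: "gdist E v w = k" using w by (auto simp: S_def)
  obtain j where "k = Suc j" using k by (cases k) auto
  then obtain y where e: "E w y" using gdist_pred[OF vV wV] dw by blast
  have dp: "real (degree V E w) > 0" using deg_pos[OF e] by simp
  have "real k * \<kappa> / 2 * real (degree V E w) \<le> real (degree V E w)"
    using ind_lb[OF vV wV] ind_le_deg[of v w] dw by simp
  then have "real k * \<kappa> / 2 \<le> 1" using dp by (simp add: mult_le_cancel_right1)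
  then show ?thesis using kpos by (simp add: field_simps)
qed

lemma vol_step:
  assumes vV: "v \<in> V"
  shows "vol v (Suc k) \<le> (2 / \<kappa> - real k) / real (Suc k) * vol v k"
proof -
  have "(real (Suc k) * \<kappa> / 2) * vol v (Suc k) = (\<Sum>w\<in>S v (Suc k). real (Suc k) * \<kappa> / 2 * real (degree V E w))"
    unfolding vol_def by (simp add: sum_distrib_left)
  also have "\<dots> \<le> (\<Sum>w\<in>S v (Suc k). real (ind v w))"
  proof (intro sum_mono)
    fix w assume "w \<in> S v (Suc k)"
    then show "real (Suc k) * \<kappa> / 2 * real (degree V E w) \<le> real (ind v w)"
      using ind_lb[OF vV, of w] by (simp add: S_def)
  qed
  also have "\<dots> = (\<Sum>u\<in>S v k. real (outd v u))" using double_count by simp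
  also have "\<dots> \<le> (\<Sum>u\<in>S v k. (1 - real k * \<kappa> / 2) * real (degree V E u))"
  proof (intro sum_mono)
    fix u assume u: "u \<in> S v k"
    have "real (gdist E v u) * \<kappa> / 2 * real (degree V E u) \<le> real (ind v u)"
      using ind_lb[OF vV] u by (auto simp: S_def)
    moreover have "real (ind v u) + real (outd v u) \<le> real (degree V E u)"
      using ind_le_deg[of v u] by (simp del: of_nat_add add: of_nat_add[symmetric])
    ultimately show "real (outd v u) \<le> (1 - real k * \<kappa> / 2) * real (degree V E u)"
      using u by (auto simp: S_def algebra_simps)
  qed
  also have "\<dots> = (1 - real k * \<kappa> / 2) * vol v k" unfolding vol_def by (simp add: sum_distrib_left)
  finally have h: "(real (Suc k) * \<kappa> / 2) * vol v (Suc k) \<le> (1 - real k * \<kappa> / 2) * vol v k" .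
  have c1: "(2 / (\<kappa> * real (Suc k))) * (real (Suc k) * \<kappa> / 2) = 1"
    using kpos by (simp del: of_nat_Suc)
  have "vol v (Suc k) = (2 / (\<kappa> * real (Suc k))) * ((real (Suc k) * \<kappa> / 2) * vol v (Suc k))"
    by (metis c1 mult.assoc mult_1)
  also have "\<dots> \<le> (2 / (\<kappa> * real (Suc k))) * ((1 - real k * \<kappa> / 2) * vol v k)"
    using h kpos by (intro mult_left_mono) auto
  also have "\<dots> = (2 / \<kappa> - real k) / real (Suc k) * vol v k"
  proof -
    have "\<kappa> + \<kappa> * real k > 0" using kpos by (simp add: add_pos_nonneg)
    then have "\<kappa> * 2 + \<kappa> * (real k * 2) \<noteq> 0" by linarith
    then show ?thesis using kpos by (simp add: field_simps)
  qed
  finally show ?thesis .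
qed

lemma vol_nonneg: "0 \<le> vol v k" unfolding vol_def by (simp add: sum_nonneg)

lemma vol_gchoose:
  assumes vV: "v \<in> V"
  shows "real k \<le> 2 / \<kappa> \<Longrightarrow> vol v k \<le> ((2 / \<kappa>) gchoose k) * vol v 0"
proof (induction k)
  case 0 then show ?case by simp
next
  case (Suc k)
  have r: "0 \<le> (2 / \<kappa> - real k) / real (Suc k)" using Suc.prems by simp
  have "vol v (Suc k) \<le> (2 / \<kappa> - real k) / real (Suc k) * vol v k" by (rule vol_step[OF vV])
  also have "\<dots> \<le> (2 / \<kappa> - real k) / real (Suc k) * (((2 / \<kappa>) gchoose k) * vol v 0)"
    using Suc r by (intro mult_left_mono) auto
  also have "\<dots> = ((2 / \<kappa>) gchoose (Suc k)) * vol v 0"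
    by (simp add: gchoose_step)
  finally show ?case .
qed

lemma vol_total:
  assumes vV: "v \<in> V"
  shows "(\<Sum>w\<in>V. real (degree V E w)) \<le> Fb (2 / \<kappa>) * real (degree V E v)"
proof -
  let ?m = "nat \<lfloor>2 / \<kappa>\<rfloor>"
  have sub: "(\<lambda>w. gdist E v w) ` V \<subseteq> {..?m}"
  proof
    fix k assume "k \<in> (\<lambda>w. gdist E v w) ` V"
    then obtain w where w: "w \<in> V" "gdist E v w = k" by auto
    show "k \<in> {..?m}"
    proof (cases "k \<ge> 1")
      case True
      have "real k \<le> 2 / \<kappa>" using layer_bound[OF vV _ True, of w] w by (simp add: S_def)
      then show ?thesis by (simp add: le_nat_floor)
    next
      case False then show ?thesis by simp
    qed
  qed
  have "(\<Sum>w\<in>V. real (degree V E w)) = (\<Sum>k\<le>?m. vol v k)"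
  proof -
    have "(\<Sum>k\<le>?m. \<Sum>w\<in>{x. x \<in> V \<and> gdist E v x = k}. real (degree V E w)) = (\<Sum>w\<in>V. real (degree V E w))"
      by (rule sum.group[OF finV _ sub]) simp
    then show ?thesis unfolding vol_def S_def by simp
  qed
  also have "\<dots> \<le> (\<Sum>k\<le>?m. ((2 / \<kappa>) gchoose k) * vol v 0)"
  proof (intro sum_mono vol_gchoose[OF vV])
    fix k assume "k \<in> {..?m}"
    then have "k \<le> ?m" by simp
    then have "real k \<le> real (nat \<lfloor>2 / \<kappa>\<rfloor>)" by simp
    also have "real (nat \<lfloor>2 / \<kappa>\<rfloor>) = real_of_int \<lfloor>2 / \<kappa>\<rfloor>" using kpos by simp
    also have "\<dots> \<le> 2 / \<kappa>" by (rule of_int_floor_le)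
    finally show "real k \<le> 2 / \<kappa>" .
  qed
  also have "vol v 0 = real (degree V E v)"
  proof -
    have "S v 0 = {v}" using vV gdist_0[OF vV] by (auto simp: S_def)
    then show ?thesis by (simp add: vol_def)
  qed
  finally show ?thesis by (simp add: Fb_def sum_distrib_right)
qed

end


lemma gchoose_step': "(a::real) gchoose (Suc k) = (a gchoose k) * (a - real k) / real (Suc k)"
proof -
  have "real (Suc k) * (a gchoose Suc k) = (a - real k) * (a gchoose k)"
    using gbinomial_absorption[of k a] gbinomial_absorb_comp[of a k] by simp
  then show ?thesis by (simp add: field_simps del: of_nat_Suc)
qed

lemma binsum_lt:
  fixes x :: real and m :: nat
  assumes xm: "real m < x" "x < real m + 1"
  shows "(\<Sum>k<Suc m. x gchoose k) < 2 powr x"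
proof -
  define c where "c = (\<lambda>n. x gchoose n)"
  have cpos: "c (Suc m) > 0"
  proof -
    have "(\<Prod>i=0..m. x - real i) > 0" using xm by (intro prod_pos) auto
    then show ?thesis unfolding c_def gbinomial_Suc by simp
  qed
  have cstep: "c (Suc n) = c n * (x - real n) / real (Suc n)" for n
    unfolding c_def by (rule gchoose_step')
  define q where "q = 1 - (real (Suc m) - x) / real (Suc (Suc m))"
  have qpos: "q > 0" using xm by (simp add: q_def field_simps)
  have key: "(\<Sum>k<Suc m. c k * z ^ k) + c (Suc m) * z ^ Suc m * (1 - (real (Suc m) - x) / real (Suc (Suc m)) * z)
      \<le> (1 + z) powr x" if z: "0 < z" "z < 1" for z
  proof -
    have s: "(\<lambda>n. c n * z ^ n) sums (1 + z) powr x"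
      unfolding c_def using z by (intro gen_binomial_real) auto
    have t: "(\<lambda>i. c (i + Suc m) * z ^ (i + Suc m)) sums ((1 + z) powr x - (\<Sum>k<Suc m. c k * z ^ k))"
      using s sums_iff_shift[of "\<lambda>n. c n * z ^ n" "Suc m"] by simp
    define a where "a = (\<lambda>i. (-1) ^ i * (c (i + Suc m) * z ^ (i + Suc m)))"
    define r where "r = (\<lambda>i::nat. (real (i + Suc m) - x) / real (Suc (i + Suc m)) * z)"
    have r01: "0 \<le> r i" "r i \<le> z" for i
    proof -
      have "real (i + Suc m) - x > 0" using xm by simp
      moreover have "real (i + Suc m) - x \<le> real (Suc (i + Suc m))" using xm by simp
      ultimately have t: "(real (i + Suc m) - x) / real (Suc (i + Suc m)) \<le> 1"
        "0 \<le> (real (i + Suc m) - x) / real (Suc (i + Suc m))" by (auto simp: divide_le_eq simp del: of_nat_Suc)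
      have "0 \<le> z" using z by simp
      show "0 \<le> r i" unfolding r_def by (rule mult_nonneg_nonneg[OF t(2) \<open>0 \<le> z\<close>])
      show "r i \<le> z" unfolding r_def by (rule mult_left_le_one_le[OF \<open>0 \<le> z\<close> t(2) t(1)])
    qed
    have astep: "a (Suc i) = a i * r i" for i
    proof -
      have "Suc i + Suc m = Suc (i + Suc m)" by simp
      then show ?thesis unfolding a_def r_def
        by (simp only: cstep) (simp add: field_simps del: of_nat_Suc of_nat_add)
    qed
    have a0: "a 0 = c (Suc m) * z ^ Suc m" by (simp add: a_def)
    have anonneg: "0 \<le> a i" for i
      by (induction i) (use a0 cpos z r01 astep in auto)
    have amono: "a (Suc i) \<le> a i" for i
      using astep[of i] anonneg[of i] r01[of i] z by (simp add: mult_left_le)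
    have abound: "a i \<le> a 0 * z ^ i" for i
    proof (induction i)
      case 0 then show ?case by simp
    next
      case (Suc i)
      have "a (Suc i) = a i * r i" by (rule astep)
      also have "\<dots> \<le> (a 0 * z ^ i) * z" using Suc anonneg[of i] r01[of i] by (intro mult_mono) auto
      finally show ?case by (simp add: mult_ac)
    qed
    have alim: "a \<longlonglongrightarrow> 0"
    proof (rule tendsto_sandwich[of "\<lambda>_. 0" _ _ "\<lambda>i. a 0 * z ^ i"])
      show "\<forall>\<^sub>F n in sequentially. 0 \<le> a n" using anonneg by simp
      show "\<forall>\<^sub>F n in sequentially. a n \<le> a 0 * z ^ n" using abound by simp
      show "(\<lambda>i. a 0 * z ^ i) \<longlonglongrightarrow> 0" using z by (intro tendsto_mult_right_zero LIMSEQ_power_zero) auto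
    qed simp
    have L: "(\<Sum>i<2*1. (-1)^i * a i) \<le> (\<Sum>i. (-1)^i * a i)"
      using summable_Leibniz'(2)[OF alim anonneg amono, of 1] .
    have "(\<lambda>i. (-1)^i * a i) = (\<lambda>i. c (i + Suc m) * z ^ (i + Suc m))"
      by (auto simp: a_def simp flip: mult.assoc power_add)
    then have "(\<Sum>i. (-1)^i * a i) = (1 + z) powr x - (\<Sum>k<Suc m. c k * z ^ k)"
      using sums_unique[OF t] by simp
    moreover have "(\<Sum>i<2*1. (-1)^i * a i) = a 0 - a 1" by (simp add: numeral_2_eq_2)
    moreover have "a 0 - a 1 = c (Suc m) * z ^ Suc m * (1 - (real (Suc m) - x) / real (Suc (Suc m)) * z)"
      using astep[of 0] a0 by (simp add: r_def algebra_simps)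
    ultimately show ?thesis using L by simp
  qed
  have lim1: "((\<lambda>z. (1 + z) powr x) \<longlongrightarrow> (1 + 1) powr x) (at_left 1)"
    by (intro tendsto_intros) auto
  have lim2: "((\<lambda>z. (\<Sum>k<Suc m. c k * z ^ k) + c (Suc m) * z ^ Suc m * (1 - (real (Suc m) - x) / real (Suc (Suc m)) * z))
      \<longlongrightarrow> (\<Sum>k<Suc m. c k * 1 ^ k) + c (Suc m) * 1 ^ Suc m * (1 - (real (Suc m) - x) / real (Suc (Suc m)) * 1)) (at_left 1)"
    by (intro tendsto_intros)
  have ev: "\<forall>\<^sub>F z in at_left (1::real). (\<Sum>k<Suc m. c k * z ^ k) + c (Suc m) * z ^ Suc m * (1 - (real (Suc m) - x) / real (Suc (Suc m)) * z) \<le> (1 + z) powr x"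
  proof -
    have "\<forall>\<^sub>F z in at_left (1::real). z \<in> {0<..<1}" by (intro eventually_at_left_real) auto
    then show ?thesis by eventually_elim (use key in auto)
  qed
  have "(\<Sum>k<Suc m. c k) + c (Suc m) * q \<le> 2 powr x"
    using tendsto_le[OF trivial_limit_at_left_real lim1 lim2 ev] by (simp add: q_def)
  moreover have "c (Suc m) * q > 0" using cpos qpos by simp
  ultimately show ?thesis by (simp add: c_def)
qed

lemma binsum_nat: "(\<Sum>k<Suc m. real m gchoose k) = 2 powr real m"
proof -
  have "(\<Sum>k<Suc m. real m gchoose k) = (\<Sum>k\<le>m. real (m choose k))"
    by (simp add: lessThan_Suc_atMost binomial_gbinomial)
  also have "\<dots> = real (\<Sum>k\<le>m. m choose k)" by simp
  also have "\<dots> = 2 ^ m" by (simp add: choose_row_sum)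
  finally show ?thesis by (simp add: powr_realpow)
qed



lemma sum_eq_le_imp:
  fixes f g :: "'b \<Rightarrow> real"
  assumes "finite A" "\<And>x. x \<in> A \<Longrightarrow> f x \<le> g x" "sum g A \<le> sum f A" "x \<in> A"
  shows "f x = g x"
proof -
  have "sum f A \<le> sum g A" using assms(2) by (rule sum_mono)
  then have "sum (\<lambda>x. g x - f x) A = 0" using assms(3) by (simp add: sum_subtractf)
  then have "\<forall>x\<in>A. g x - f x = 0" using sum_nonneg_eq_0_iff[OF assms(1), of "\<lambda>x. g x - f x"] assms(2) by simp
  then show ?thesis using assms(4) by simp
qed

lemma Fb_nat: "Fb (real m) = 2 ^ m"
  using binsum_nat[of m] by (simp add: Fb_def lessThan_Suc_atMost powr_realpow)

context sgk begin

lemma card_layers: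
  assumes vV: "v \<in> V"
  shows "real (card V) = (\<Sum>k\<le>nat \<lfloor>2 / \<kappa>\<rfloor>. real (card (S v k)))"
proof -
  let ?m = "nat \<lfloor>2 / \<kappa>\<rfloor>"
  have sub: "(\<lambda>w. gdist E v w) ` V \<subseteq> {..?m}"
  proof
    fix k assume "k \<in> (\<lambda>w. gdist E v w) ` V"
    then obtain w where w: "w \<in> V" "gdist E v w = k" by auto
    show "k \<in> {..?m}"
    proof (cases "k \<ge> 1")
      case True
      have "real k \<le> 2 / \<kappa>" using layer_bound[OF vV _ True, of w] w by (simp add: S_def)
      then show ?thesis by (simp add: le_nat_floor)
    next
      case False then show ?thesis by simp
    qed
  qed
  have "(\<Sum>k\<le>?m. \<Sum>w\<in>{x. x \<in> V \<and> gdist E v x = k}. (1::real)) = (\<Sum>w\<in>V. 1)"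
    by (rule sum.group[OF finV _ sub]) simp
  then show ?thesis unfolding S_def by simp
qed

lemma equality_structure:
  assumes Nm: "2 / \<kappa> = real m" and cV: "card V = 2 ^ m"
  shows "\<forall>u\<in>V. degree V E u = m"
    and "\<forall>v\<in>V. \<forall>w\<in>V. ind v w = gdist E v w \<and> ind v w + outd v w = degree V E w"
proof -
  have m1: "m \<ge> 1" using Nm kpos
    by (metis One_nat_def Suc_leI divide_pos_pos gr0I of_nat_0 order_less_irrefl zero_less_numeral)
  have flm: "nat \<lfloor>2 / \<kappa>\<rfloor> = m" using Nm by simp
  have km: "\<kappa> = 2 / real m" using Nm kpos m1 by (simp add: field_simps)
  define \<delta> where "\<delta> = Min (degree V E ` V)"
  have "\<delta> \<in> degree V E ` V" unfolding \<delta>_def using finV Vne by (intro Min_in) auto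
  then obtain v0 where v0: "v0 \<in> V" "degree V E v0 = \<delta>" by auto
  have dmin: "\<delta> \<le> degree V E u" if "u \<in> V" for u
    using that finV by (auto simp: \<delta>_def)
  have two: "card V \<ge> 2" using cV m1
    by (metis One_nat_def le_trans one_le_numeral power_increasing power_one_right)
  obtain u where u: "u \<in> V" "u \<noteq> v0"
  proof -
    have "\<not> (V \<subseteq> {v0})"
    proof
      assume "V \<subseteq> {v0}"
      then have "card V \<le> 1" using card_mono[of "{v0}" V] by simp
      then show False using two by simp
    qed
    then show ?thesis using that by blast
  qed
  have dpos: "\<delta> > 0"
  proof -
    obtain j where "gdist E u v0 = Suc j" using gdist_0[OF u(1) v0(1)] u(2) by (cases "gdist E u v0") auto
    then obtain y where "E v0 y" using gdist_pred[OF u(1) v0(1)] by blast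
    then show ?thesis using deg_pos[of v0 y] v0(2) by simp
  qed
  have reg: "degree V E w = \<delta>" if "w \<in> V" for w
  proof -
    have "(\<Sum>w\<in>V. real (degree V E w)) \<le> Fb (2 / \<kappa>) * real (degree V E v0)" by (rule vol_total[OF v0(1)])
    also have "\<dots> = 2 ^ m * real \<delta>" unfolding Nm Fb_nat v0(2) ..
    also have "\<dots> = (\<Sum>w\<in>V. real \<delta>)" using cV by simp
    finally have le: "(\<Sum>w\<in>V. real (degree V E w)) \<le> (\<Sum>w\<in>V. real \<delta>)" .
    have "real \<delta> = real (degree V E w)"
      by (rule sum_eq_le_imp[OF finV _ le that]) (use dmin in simp)
    then show ?thesis by simp
  qed
  have nk: "card (S v k) = m choose k" if vV: "v \<in> V" and k: "k \<le> m" for v k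
  proof -
    have le: "real (card (S v k)) \<le> real (m choose k)" if "k \<le> m" for k
    proof -
      have "vol v k = real \<delta> * real (card (S v k))" unfolding vol_def using reg by (simp add: S_def)
      moreover have "vol v 0 = real \<delta>"
      proof -
        have "S v 0 = {v}" using vV gdist_0[OF vV] by (auto simp: S_def)
        then show ?thesis using reg vV by (simp add: vol_def)
      qed
      moreover have "vol v k \<le> ((2 / \<kappa>) gchoose k) * vol v 0" using vol_gchoose[OF vV] that Nm by simp
      ultimately have "real \<delta> * real (card (S v k)) \<le> real \<delta> * real (m choose k)"
        using Nm by (simp add: binomial_gbinomial mult.commute)
      then show ?thesis using dpos by simp
    qed
    have "(\<Sum>k\<le>m. real (m choose k)) \<le> (\<Sum>k\<le>m. real (card (S v k)))"
    proof -
      have "(\<Sum>k\<le>m. real (m choose k)) = real (card V)" using cV by (simp flip: of_nat_sum add: choose_row_sum)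
      also have "\<dots> = (\<Sum>k\<le>m. real (card (S v k)))" using card_layers[OF vV] flm by simp
      finally show ?thesis by simp
    qed
    then have "real (card (S v k)) = real (m choose k)"
      using sum_eq_le_imp[of "{..m}" "\<lambda>k. real (card (S v k))" "\<lambda>k. real (m choose k)" k] le k by simp
    then show ?thesis by simp
  qed
  have dm: "\<delta> = m"
  proof -
    have "S v0 1 = nbr v0" using v0 gdist_edge gdist_1[OF v0(1)] by (auto simp: S_def nbr_def dest: EV2)
    then have "card (S v0 1) = \<delta>" using v0 by (simp add: deg_nbr)
    then show ?thesis using nk[OF v0(1), of 1] m1 by simp
  qed
  show "\<forall>u\<in>V. degree V E u = m" using reg dm by simp
  have indlb: "real (gdist E v w) \<le> real (ind v w)" if "v \<in> V" "w \<in> V" for v w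
    using ind_lb[OF that] reg[OF that(2)] dm km m1 by simp
  have step: "(\<forall>w\<in>S v (Suc k). ind v w = Suc k) \<and> (\<forall>u\<in>S v k. outd v u = m - k)"
    if vV: "v \<in> V" and k: "k < m" for v k
  proof -
    have binN: "Suc k * (m choose Suc k) = (m - k) * (m choose k)"
      by (simp only: binomial_absorption binomial_absorb_comp)
    have bin: "real (Suc k) * real (m choose Suc k) = real (m - k) * real (m choose k)"
      using arg_cong[OF binN, of real] by (simp only: of_nat_mult)
    have i_ge: "real (Suc k) \<le> real (ind v x)" if "x \<in> S v (Suc k)" for x
      using indlb[OF vV, of x] that by (simp add: S_def)
    have o_le: "real (outd v x) \<le> real (m - k)" if "x \<in> S v k" for x
    proof -
      have "real (gdist E v x) \<le> real (ind v x)" using indlb[OF vV, of x] that by (simp add: S_def)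
      moreover have "ind v x + outd v x \<le> m" using ind_le_deg[of v x] reg[of x] dm that by (simp add: S_def)
      ultimately show ?thesis using that k by (simp add: S_def)
    qed
    have "(\<Sum>x\<in>S v (Suc k). real (Suc k)) = real (Suc k) * real (m choose Suc k)"
      using nk[OF vV, of "Suc k"] k by simp
    also have "\<dots> = (\<Sum>x\<in>S v k. real (m - k))" using nk[OF vV, of k] k bin by simp
    finally have e1: "(\<Sum>x\<in>S v (Suc k). real (Suc k)) = (\<Sum>x\<in>S v k. real (m - k))" .
    have a1: "(\<Sum>x\<in>S v (Suc k). real (Suc k)) \<le> (\<Sum>x\<in>S v (Suc k). real (ind v x))"
      using i_ge by (rule sum_mono)
    have a2: "(\<Sum>x\<in>S v k. real (outd v x)) \<le> (\<Sum>x\<in>S v k. real (m - k))"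
      using o_le by (rule sum_mono)
    have dc: "(\<Sum>x\<in>S v k. real (outd v x)) = (\<Sum>x\<in>S v (Suc k). real (ind v x))" by (rule double_count)
    have le1: "(\<Sum>x\<in>S v (Suc k). real (ind v x)) \<le> (\<Sum>x\<in>S v (Suc k). real (Suc k))"
      using e1 a2 dc by linarith
    have le2: "(\<Sum>x\<in>S v k. real (m - k)) \<le> (\<Sum>x\<in>S v k. real (outd v x))"
      using e1 a1 dc by linarith
    have "real (Suc k) = real (ind v w)" if w: "w \<in> S v (Suc k)" for w by (rule sum_eq_le_imp[OF finS i_ge le1 w])
    moreover have "real (outd v u) = real (m - k)" if u: "u \<in> S v k" for u by (rule sum_eq_le_imp[OF finS o_le le2 u])
    ultimately show ?thesis by (metis of_nat_eq_iff)
  qed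
  show "\<forall>v\<in>V. \<forall>w\<in>V. ind v w = gdist E v w \<and> ind v w + outd v w = degree V E w"
  proof (intro ballI)
    fix v w assume vV: "v \<in> V" and wV: "w \<in> V"
    define j where "j = gdist E v w"
    have jm: "j \<le> m"
    proof (cases "j \<ge> 1")
      case True
      then have "real j \<le> 2 / \<kappa>" using layer_bound[OF vV _ True, of w] wV by (simp add: S_def j_def)
      then show ?thesis using Nm by simp
    qed simp
    have ij: "ind v w = j"
    proof (cases j)
      case 0
      then have "w = v" using gdist_0[OF vV wV] by (simp add: j_def)
      then show ?thesis using 0 by (simp add: ind_def)
    next
      case (Suc k)
      then show ?thesis using step[OF vV, of k] jm wV by (simp add: S_def j_def)
    qed
    have "outd v w = m - j"
    proof (cases "j < m")
      case True then show ?thesis using step[OF vV True] wV by (simp add: S_def j_def)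
    next
      case False
      then have "j = m" using jm by simp
      then show ?thesis using ind_le_deg[of v w] reg[OF wV] dm ij by simp
    qed
    then show "ind v w = gdist E v w \<and> ind v w + outd v w = degree V E w"
      using ij jm reg[OF wV] dm by (simp add: j_def)
  qed
qed

end


locale hc = sg35 +
  fixes d :: nat
  assumes reg: "\<And>u. u \<in> V \<Longrightarrow> degree V E u = d"
    and lay: "\<And>v w. v \<in> V \<Longrightarrow> w \<in> V \<Longrightarrow> ind v w = gdist E v w \<and> ind v w + outd v w = degree V E w"
    and cV: "card V = 2 ^ d"
begin

lemma bip:
  assumes vV: "v \<in> V" and e: "E w a"
  shows "gdist E v a \<noteq> gdist E v w"
proof -
  have wV: "w \<in> V" using EV1[OF e] .
  let ?I = "{a \<in> V. E w a \<and> gdist E v a + 1 = gdist E v w}"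
  let ?O = "{a \<in> V. E w a \<and> gdist E v a = gdist E v w + 1}"
  have "card (?I \<union> ?O) = card ?I + card ?O" using finV by (intro card_Un_disjoint) auto
  also have "\<dots> = card (nbr w)" using lay[OF vV wV] by (simp add: ind_def outd_def deg_nbr)
  finally have c: "card (?I \<union> ?O) = card (nbr w)" .
  have "?I \<union> ?O = nbr w" using fin_nbr c by (intro card_subset_eq) (auto simp: nbr_def)
  moreover have "a \<in> nbr w" using e EV2 by (simp add: nbr_def)
  ultimately have "a \<in> ?I \<union> ?O" by simp
  then show ?thesis by auto
qed

lemma adjD:
  assumes vV: "v \<in> V" and e: "E w a"
  shows "gdist E v a = gdist E v w + 1 \<or> gdist E v w = gdist E v a + 1"
  using bip[OF vV e] gdist_adj[OF e vV] gdist_adj2[OF e vV] by linarith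

definition v0 where "v0 = (SOME v. v \<in> V)"

lemma v0V: "v0 \<in> V" unfolding v0_def using Vne by (simp add: some_in_eq)

definition nb where "nb = (SOME h. bij_betw h {1..d} (nbr v0))"

lemma nb_bij: "bij_betw nb {1..d} (nbr v0)"
proof -
  have "card {1..d} = card (nbr v0)" using reg[OF v0V] by (simp add: deg_nbr)
  then have "\<exists>h. bij_betw h {1..d} (nbr v0)" using fin_nbr by (intro finite_same_card_bij) auto
  then show ?thesis unfolding nb_def by (rule someI_ex)
qed

lemma nb_in: "i \<in> {1..d} \<Longrightarrow> nb i \<in> nbr v0"
  using nb_bij by (auto simp: bij_betw_def)

lemma nb_V: "i \<in> {1..d} \<Longrightarrow> nb i \<in> V"
  using nb_in by (auto simp: nbr_def)

abbreviation D where "D w \<equiv> gdist E v0 w"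

definition phi where "phi w = {i \<in> {1..d}. gdist E (nb i) w + 1 = D w}"

lemma phi_sub: "phi w \<subseteq> {1..d}" by (auto simp: phi_def)

lemma card_phi:
  assumes wV: "w \<in> V"
  shows "card (phi w) = D w"
proof -
  have "nb ` phi w = {a \<in> V. E v0 a \<and> gdist E w a + 1 = gdist E w v0}"
  proof
    show "nb ` phi w \<subseteq> {a \<in> V. E v0 a \<and> gdist E w a + 1 = gdist E w v0}"
      using nb_in by (auto simp: phi_def nbr_def gdist_sym)
  next
    show "{a \<in> V. E v0 a \<and> gdist E w a + 1 = gdist E w v0} \<subseteq> nb ` phi w"
    proof
      fix a assume a: "a \<in> {a \<in> V. E v0 a \<and> gdist E w a + 1 = gdist E w v0}"
      then have "a \<in> nbr v0" by (simp add: nbr_def)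
      then have "a \<in> nb ` {1..d}" using nb_bij by (simp add: bij_betw_def)
      then obtain i where i: "i \<in> {1..d}" "nb i = a" by blast
      then have "i \<in> phi w" using a by (auto simp: phi_def gdist_sym)
      then show "a \<in> nb ` phi w" using i by auto
    qed
  qed
  moreover have "inj_on nb (phi w)" using nb_bij phi_sub by (auto simp: bij_betw_def intro: inj_on_subset)
  ultimately have "card (phi w) = ind w v0" by (simp add: ind_def card_image[symmetric])
  also have "\<dots> = D w" using lay[OF wV v0V] gdist_sym by simp
  finally show ?thesis .
qed

lemma phi_mono:
  assumes e: "E w w'" and dd: "D w' = D w + 1"
  shows "phi w \<subseteq> phi w'"
proof
  fix i assume i: "i \<in> phi w"
  then have id: "i \<in> {1..d}" and g: "gdist E (nb i) w + 1 = D w" by (auto simp: phi_def)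
  have aV: "nb i \<in> V" using nb_V[OF id] .
  have wV: "w \<in> V" and w'V: "w' \<in> V" using e EV1 EV2 by auto
  have e0: "E v0 (nb i)" using nb_in[OF id] by (simp add: nbr_def)
  have "gdist E (nb i) w' \<le> gdist E (nb i) w + 1" using gdist_adj[OF e aV] .
  moreover have "D w' \<le> gdist E v0 (nb i) + gdist E (nb i) w'" using gdist_tri[OF v0V aV w'V] .
  moreover have "gdist E v0 (nb i) = 1" using gdist_edge[OF e0] .
  ultimately have "gdist E (nb i) w' + 1 = D w'" using g dd by linarith
  then show "i \<in> phi w'" using id by (simp add: phi_def)
qed

lemma phi_adj:
  assumes e: "E w w'"
  shows "hypercube_adj (phi w) (phi w')"
proof -
  have wV: "w \<in> V" and w'V: "w' \<in> V" using e EV1 EV2 by auto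
  have fin: "finite (phi x)" for x using phi_sub finite_subset by blast
  have one: "card (phi b - phi a) = 1 \<and> phi a \<subseteq> phi b" if e': "E a b" and dd: "D b = D a + 1" for a b
  proof -
    have aV: "a \<in> V" and bV: "b \<in> V" using e' EV1 EV2 by auto
    have s: "phi a \<subseteq> phi b" by (rule phi_mono[OF e' dd])
    have "card (phi b - phi a) = card (phi b) - card (phi a)" using s fin by (simp add: card_Diff_subset)
    then show ?thesis using card_phi[OF aV] card_phi[OF bV] dd s by simp
  qed
  show ?thesis
  proof (cases "D w' = D w + 1")
    case True
    then have "card (phi w' - phi w) = 1" "phi w \<subseteq> phi w'" using one[OF e] by auto
    moreover have "(phi w - phi w') \<union> (phi w' - phi w) = phi w' - phi w" using \<open>phi w \<subseteq> phi w'\<close> by auto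
    ultimately show ?thesis by (simp add: hypercube_adj_def)
  next
    case False
    then have dd: "D w = D w' + 1" using adjD[OF v0V e] by simp
    then have "card (phi w - phi w') = 1" "phi w' \<subseteq> phi w" using one[OF Esym[OF e]] by auto
    moreover have "(phi w - phi w') \<union> (phi w' - phi w) = phi w - phi w'" using \<open>phi w' \<subseteq> phi w\<close> by auto
    ultimately show ?thesis by (simp add: hypercube_adj_def)
  qed
qed

lemma cover:
  assumes INJ: "\<And>r r'. r \<in> V \<Longrightarrow> r' \<in> V \<Longrightarrow> D r + 1 = D p \<Longrightarrow> phi r = phi r' \<Longrightarrow> r = r'"
    and pV: "p \<in> V" and i: "i \<in> phi p"
  shows "\<exists>r. E p r \<and> D r + 1 = D p \<and> phi r = phi p - {i}"
proof -
  define P where "P = {r \<in> V. E p r \<and> D r + 1 = D p}"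
  have finP: "finite P" using finV by (simp add: P_def)
  have cP: "card P = D p" using lay[OF v0V pV] by (simp add: ind_def P_def)
  define Q where "Q = (\<lambda>i. phi p - {i}) ` phi p"
  have fin: "finite (phi x)" for x using phi_sub finite_subset by blast
  have sub: "phi ` P \<subseteq> Q"
  proof
    fix T assume "T \<in> phi ` P"
    then obtain r where r: "r \<in> P" "T = phi r" by auto
    have rV: "r \<in> V" and e: "E r p" and dr: "D p = D r + 1" using r Esym by (auto simp: P_def)
    have s: "phi r \<subseteq> phi p" by (rule phi_mono[OF e dr])
    have "card (phi p - phi r) = 1" using s fin card_phi[OF rV] card_phi[OF pV] dr by (simp add: card_Diff_subset)
    then obtain i' where i': "phi p - phi r = {i'}" by (rule card_1_singletonE)
    then have "i' \<in> phi p" "phi r = phi p - {i'}" using s by auto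
    then show "T \<in> Q" using r by (auto simp: Q_def)
  qed
  have injP: "inj_on phi P" by (rule inj_onI) (use INJ in \<open>auto simp: P_def\<close>)
  have "inj_on (\<lambda>i. phi p - {i}) (phi p)" by (rule inj_onI) auto
  then have cQ: "card Q = D p" using card_phi[OF pV] by (simp add: Q_def card_image)
  have "phi ` P = Q"
    using sub cQ cP injP fin by (intro card_subset_eq) (auto simp: Q_def card_image)
  moreover have "phi p - {i} \<in> Q" using i by (auto simp: Q_def)
  ultimately obtain r where "r \<in> P" "phi r = phi p - {i}" by auto
  then show ?thesis by (auto simp: P_def)
qed

lemma inj_layer: "w \<in> V \<Longrightarrow> w' \<in> V \<Longrightarrow> D w = j \<Longrightarrow> phi w = phi w' \<Longrightarrow> w = w'"
proof (induction j arbitrary: w w' rule: less_induct)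
  case (less j)
  have d': "D w' = j" using card_phi[OF less.prems(1)] card_phi[OF less.prems(2)] less.prems by simp
  show ?case
  proof (cases "j \<le> 1")
    case True
    show ?thesis
    proof (cases "j = 0")
      case True
      then show ?thesis using gdist_0[OF v0V less.prems(1)] gdist_0[OF v0V less.prems(2)] less.prems d' by simp
    next
      case False
      then have j1: "j = 1" using True by simp
      then have "card (phi w) = 1" using card_phi[OF less.prems(1)] less.prems by simp
      then obtain i where i: "phi w = {i}" by (rule card_1_singletonE)
      have "nb i = x" if "x \<in> V" "D x = 1" "i \<in> phi x" for x
      proof -
        have id: "i \<in> {1..d}" and "gdist E (nb i) x + 1 = D x" using that by (auto simp: phi_def)
        then have "gdist E (nb i) x = 0" using that by simp
        then show ?thesis using gdist_0[OF nb_V[OF id] that(1)] by simp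
      qed
      then show ?thesis using i less.prems d' j1 by (metis insertI1)
    qed
  next
    case False
    then have j2: "j \<ge> 2" by simp
    have wV: "w \<in> V" and w'V: "w' \<in> V" using less.prems by auto
    let ?T = "phi w"
    have c2: "card ?T \<ge> 2" using card_phi[OF wV] less.prems j2 by simp
    have finT: "finite ?T" using phi_sub finite_subset by blast
    have "?T \<noteq> {}" using c2 by auto
    then obtain i1 where i1: "i1 \<in> ?T" by blast
    have cd1: "card (?T - {i1}) \<ge> 1" using c2 i1 finT by (simp add: card_Diff_singleton)
    have "?T - {i1} \<noteq> {}"
    proof
      assume "?T - {i1} = {}"
      then have "card (?T - {i1}) = 0" by (simp only: card.empty)
      then show False using cd1 by simp
    qed
    then obtain i2 where "i2 \<in> ?T - {i1}" by blast
    then have i12: "i1 \<in> ?T" "i2 \<in> ?T" "i1 \<noteq> i2" using i1 by auto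
    have INJ1: "r = r'" if "r \<in> V" "r' \<in> V" "D r + 1 = j" "phi r = phi r'" for r r'
      using less.IH[of "D r" r r'] that by simp
    have INJ2: "r = r'" if "r \<in> V" "r' \<in> V" "D r + 2 = j" "phi r = phi r'" for r r'
      using less.IH[of "D r" r r'] that by simp
    have cov: "\<exists>r. E x r \<and> D r + 1 = j \<and> phi r = ?T - {i}" if "x \<in> V" "D x = j" "phi x = ?T" "i \<in> ?T" for x i
    proof -
      have "\<exists>r. E x r \<and> D r + 1 = D x \<and> phi r = phi x - {i}"
      proof (rule cover)
        show "r = r'" if "r \<in> V" "r' \<in> V" "D r + 1 = D x" "phi r = phi r'" for r r'
          using INJ1[OF that(1,2) _ that(4)] that(3) \<open>D x = j\<close> by simp
      qed (use that in auto)
      then show ?thesis using that by simp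
    qed
    obtain p where p: "E w p" "D p + 1 = j" "phi p = ?T - {i1}" using cov[OF wV less.prems(3) refl i12(1)] by blast
    obtain p' where p': "E w' p'" "D p' + 1 = j" "phi p' = ?T - {i1}" using cov[OF w'V d' less.prems(4)[symmetric] i12(1)] by blast
    obtain q where q: "E w q" "D q + 1 = j" "phi q = ?T - {i2}" using cov[OF wV less.prems(3) refl i12(2)] by blast
    obtain q' where q': "E w' q'" "D q' + 1 = j" "phi q' = ?T - {i2}" using cov[OF w'V d' less.prems(4)[symmetric] i12(2)] by blast
    have pV: "p \<in> V" and qV: "q \<in> V" using p q EV2 by auto
    have p'V: "p' \<in> V" and q'V: "q' \<in> V" using p' q' EV2 by auto
    have "p = p'" using INJ1[of p p'] pV p'V p(2) p(3) p'(3) by simp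
    have "q = q'" using INJ1[of q q'] qV q'V q(2) q(3) q'(3) by simp
    have i2p: "i2 \<in> phi p" using p(3) i12 by simp
    have i1q: "i1 \<in> phi q" using q(3) i12 by simp
    have "i2 \<notin> phi q" using q(3) by simp
    then have "p \<noteq> q" using i2p by blast
    have INJp: "r = r'" if "r \<in> V" "r' \<in> V" "D r + 1 = D p" "phi r = phi r'" for r r'
      using INJ2[of r r'] that p(2) by simp
    have INJq: "r = r'" if "r \<in> V" "r' \<in> V" "D r + 1 = D q" "phi r = phi r'" for r r'
      using INJ2[of r r'] that q(2) by simp
    obtain r where r: "E p r" "D r + 1 = D p" "phi r = phi p - {i2}"
      using cover[OF INJp pV i2p] by blast
    obtain r' where r': "E q r'" "D r' + 1 = D q" "phi r' = phi q - {i1}"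
      using cover[OF INJq qV i1q] by blast
    have rV: "r \<in> V" and r'V: "r' \<in> V" using r r' EV2 by auto
    have "phi r = phi r'" unfolding r(3) r'(3) p(3) q(3) by blast
    then have "r = r'" using INJ2[OF rV r'V] r(2) p(2) by simp
    show ?thesis
    proof (rule ccontr)
      assume ne: "w \<noteq> w'"
      have npq: "\<not> E p q"
      proof
        assume "E p q"
        then have "D q \<noteq> D p" by (rule bip[OF v0V])
        then show False using p(2) q(2) by simp
      qed
      have "gdist E q p \<ge> 2" using gdist_ge2[OF qV pV] \<open>p \<noteq> q\<close> npq Esym by blast
      moreover have "gdist E q p \<le> 2"
      proof -
        have "walkn E q p 2" using q(1) p(1) Esym by (auto simp: numeral_2_eq_2 walknSuc)
        then show ?thesis by (rule gdist_le)
      qed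
      ultimately have g2: "gdist E q p = 2" by simp
      have "ind q p = 2" using lay[OF qV pV] g2 by simp
      moreover have sub3: "{w, w', r} \<subseteq> {a \<in> V. E p a \<and> gdist E q a + 1 = gdist E q p}"
      proof -
        have "E p w" "E p w'" "E p r" using p(1) p'(1) \<open>p = p'\<close> r(1) Esym by auto
        moreover have "gdist E q w = 1" "gdist E q w' = 1" "gdist E q r = 1"
          using gdist_edge[OF Esym[OF q(1)]] gdist_edge[of q w'] Esym[OF q'(1)] \<open>q = q'\<close>
            gdist_edge[OF r'(1)] \<open>r = r'\<close> by auto
        ultimately show ?thesis using wV w'V rV g2 by auto
      qed
      moreover have "card {w, w', r} = 3"
      proof -
        have "D r + 2 = j" using r(2) p(2) by simp
        then have "r \<noteq> w" "r \<noteq> w'" using less.prems(3) d' by auto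
        then show ?thesis using ne by simp
      qed
      moreover have "finite {a \<in> V. E p a \<and> gdist E q a + 1 = gdist E q p}" using finV by simp
      ultimately have "3 \<le> ind q p" unfolding ind_def using card_mono by metis
      then show False using \<open>ind q p = 2\<close> by simp
    qed
  qed
qed

lemma phi_inj: "inj_on phi V"
  by (rule inj_onI) (use inj_layer in blast)

lemma iso: "iso_hypercube V E d"
  unfolding iso_hypercube_def
proof (intro exI conjI ballI)
  have img: "phi ` V \<subseteq> Pow {1..d}" using phi_sub by auto
  have "card (phi ` V) = card (Pow {1..d})" using phi_inj cV by (simp add: card_image card_Pow)
  then have "phi ` V = Pow {1..d}" using img by (intro card_subset_eq) auto
  then show "bij_betw phi V (Pow {1..d})" using phi_inj by (simp add: bij_betw_def)
  fix x y assume xV: "x \<in> V" and yV: "y \<in> V"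
  show "E x y \<longleftrightarrow> hypercube_adj (phi x) (phi y)"
  proof
    assume "E x y" then show "hypercube_adj (phi x) (phi y)" by (rule phi_adj)
  next
    assume h: "hypercube_adj (phi x) (phi y)"
    define S where "S = phi x"
    define g where "g = (\<lambda>i. if i \<in> S then S - {i} else insert i S)"
    define H where "H = {T \<in> Pow {1..d}. hypercube_adj S T}"
    have Hsub: "H \<subseteq> g ` {1..d}"
    proof
      fix T assume T: "T \<in> H"
      then have "card ((S - T) \<union> (T - S)) = 1" by (simp add: H_def hypercube_adj_def)
      then obtain i where i: "(S - T) \<union> (T - S) = {i}" by (rule card_1_singletonE)
      have Ss: "S \<subseteq> {1..d}" using phi_sub by (simp add: S_def)
      have Ts: "T \<subseteq> {1..d}" using T by (simp add: H_def)
      have "i \<in> (S - T) \<union> (T - S)" using i by simp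
      then have "i \<in> {1..d}" using Ss Ts by blast
      moreover have "T = g i"
      proof (rule set_eqI)
        fix z
        have key: "z \<in> (S - T) \<union> (T - S) \<longleftrightarrow> z = i" using i by simp
        show "z \<in> T \<longleftrightarrow> z \<in> g i"
        proof (cases "i \<in> S")
          case True
          then have gi: "g i = S - {i}" by (simp add: g_def)
          show ?thesis unfolding gi using key True by blast
        next
          case False
          then have gi: "g i = insert i S" by (simp add: g_def)
          show ?thesis unfolding gi using key False by blast
        qed
      qed
      ultimately show "T \<in> g ` {1..d}" by auto
    qed
    have cH: "card H \<le> d" using card_image_le[of "{1..d}" g] card_mono[OF _ Hsub] by simp
    have NV: "nbr x \<subseteq> V" by (auto simp: nbr_def)
    have sub2: "phi ` nbr x \<subseteq> H" using phi_adj phi_sub by (auto simp: H_def S_def nbr_def)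
    have "card (phi ` nbr x) = d" using inj_on_subset[OF phi_inj NV] reg[OF xV] by (simp add: card_image deg_nbr)
    moreover have finH: "finite H" using Hsub finite_subset by blast
    moreover have "card (phi ` nbr x) \<le> card H" by (rule card_mono[OF finH sub2])
    ultimately have "card (phi ` nbr x) = card H" using cH by linarith
    then have "phi ` nbr x = H" by (rule card_subset_eq[OF finH sub2])
    moreover have "phi y \<in> H" using h phi_sub by (auto simp: H_def S_def)
    ultimately obtain a where a: "a \<in> nbr x" "phi a = phi y" by auto
    then have "a = y" using phi_inj yV by (auto simp: nbr_def inj_on_def)
    then show "E x y" using a by (simp add: nbr_def)
  qed
qed

end


lemma Fb_le:
  assumes x0: "x \<ge> 0"
  shows "Fb x \<le> 2 powr x \<and> (Fb x = 2 powr x \<longrightarrow> x = real (nat \<lfloor>x\<rfloor>))"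
proof (cases "x = real (nat \<lfloor>x\<rfloor>)")
  case True
  then have "Fb x = 2 powr x" using Fb_nat[of "nat \<lfloor>x\<rfloor>"] by (metis powr_realpow zero_less_numeral)
  then show ?thesis using True by simp
next
  case False
  define m where "m = nat \<lfloor>x\<rfloor>"
  have "real m \<le> x" using x0 by (simp add: m_def)
  then have a: "real m < x" using False by (simp add: m_def)
  have b: "x < real m + 1" using x0 by (simp add: m_def)
  have "Fb x = (\<Sum>k<Suc m. x gchoose k)" by (simp add: Fb_def m_def lessThan_Suc_atMost)
  also have "\<dots> < 2 powr x" by (rule binsum_lt[OF a b])
  finally show ?thesis by simp
qed

theorem theorem1p6:
  fixes V :: "'a set" and E :: "'a \<Rightarrow> 'a \<Rightarrow> bool" and \<kappa> :: real
  assumes "simple_graph V E" and "connected_graph V E"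
    and "no_C3 E" and "no_C5 E"
    and "\<kappa> > 0"
    and "\<forall>x y. E x y \<longrightarrow> kappa_LLY V E x y \<ge> \<kappa>"
  shows "real (card V) \<le> 2 powr (2 / \<kappa>)
    \<and> (real (card V) = 2 powr (2 / \<kappa>) \<longleftrightarrow>
         (\<exists>d::nat. d > 0 \<and> iso_hypercube V E d \<and> \<kappa> = 2 / real d))"
proof -
  interpret sgk V E \<kappa>
    using assms by unfold_locales (auto simp: sgraph_def sg35_axioms_def sgk_axioms_def)
  define N where "N = 2 / \<kappa>"
  have N0: "N > 0" using assms(5) by (simp add: N_def)
  have gt1: "1 < 2 powr N" using powr_less_mono[of 0 N 2] N0 by simp
  have cV1: "card V \<ge> 1" using finV Vne by (simp add: Suc_le_eq card_gt_0_iff)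
  have main: "real (card V) \<le> Fb N" if two: "card V \<ge> 2"
  proof -
    define \<delta> where "\<delta> = Min (degree V E ` V)"
    have "\<delta> \<in> degree V E ` V" unfolding \<delta>_def using finV Vne by (intro Min_in) auto
    then obtain v0 where v0: "v0 \<in> V" "degree V E v0 = \<delta>" by auto
    have dmin: "\<delta> \<le> degree V E u" if "u \<in> V" for u
      using that finV by (auto simp: \<delta>_def)
    obtain u where u: "u \<in> V" "u \<noteq> v0"
    proof -
      have "\<not> (V \<subseteq> {v0})"
      proof
        assume "V \<subseteq> {v0}"
        then have "card V \<le> 1" using card_mono[of "{v0}" V] by simp
        then show False using two by simp
      qed
      then show ?thesis using that by blast
    qed
    have dpos: "\<delta> > 0"
    proof -
      obtain j where "gdist E u v0 = Suc j" using gdist_0[OF u(1) v0(1)] u(2) by (cases "gdist E u v0") auto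
      then obtain y where "E v0 y" using gdist_pred[OF u(1) v0(1)] by blast
      then show ?thesis using deg_pos[of v0 y] v0(2) by simp
    qed
    have "real (card V) * real \<delta> = (\<Sum>w\<in>V. real \<delta>)" by simp
    also have "\<dots> \<le> (\<Sum>w\<in>V. real (degree V E w))" using dmin by (intro sum_mono) auto
    also have "\<dots> \<le> Fb N * real \<delta>" using vol_total[OF v0(1)] v0(2) by (simp add: N_def)
    finally show ?thesis using dpos by simp
  qed
  have FbN: "Fb N \<le> 2 powr N \<and> (Fb N = 2 powr N \<longrightarrow> N = real (nat \<lfloor>N\<rfloor>))"
    using Fb_le N0 by simp
  have part1: "real (card V) \<le> 2 powr N"
  proof (cases "card V \<ge> 2")
    case True then show ?thesis using main FbN by linarith
  next
    case False
    then have "card V = 1" using cV1 by simp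
    then show ?thesis using gt1 by simp
  qed
  have fwd: "\<exists>d::nat. d > 0 \<and> iso_hypercube V E d \<and> \<kappa> = 2 / real d" if eq: "real (card V) = 2 powr N"
  proof -
    have two: "card V \<ge> 2"
    proof (rule ccontr)
      assume "\<not> card V \<ge> 2"
      then have "card V = 1" using cV1 by simp
      then show False using eq gt1 by simp
    qed
    have "Fb N = 2 powr N" using main[OF two] FbN eq by linarith
    then have Nm: "N = real (nat \<lfloor>N\<rfloor>)" using FbN by simp
    define m where "m = nat \<lfloor>N\<rfloor>"
    have Nm': "2 / \<kappa> = real m" using Nm by (simp add: m_def N_def)
    have rm: "real m = N" unfolding m_def using Nm by (rule sym)
    have m0: "m > 0" using rm N0 by simp
    have cVm: "card V = 2 ^ m"
    proof -
      have "real (card V) = 2 powr real m" using eq Nm by (simp add: m_def)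
      also have "\<dots> = real (2 ^ m)" by (simp add: powr_realpow)
      finally show ?thesis by (simp only: of_nat_eq_iff)
    qed
    note es = equality_structure[OF Nm' cVm]
    interpret hc V E m
    proof unfold_locales
      show "\<And>u. u \<in> V \<Longrightarrow> degree V E u = m" using es(1) by blast
      show "\<And>v w. v \<in> V \<Longrightarrow> w \<in> V \<Longrightarrow> ind v w = gdist E v w \<and> ind v w + outd v w = degree V E w"
        using es(2) by blast
      show "card V = 2 ^ m" by (rule cVm)
    qed
    have "iso_hypercube V E m" by (rule iso)
    moreover have "\<kappa> = 2 / real m" using Nm' assms(5) m0 by (simp add: field_simps)
    ultimately show ?thesis using m0 by blast
  qed
  have bwd: "real (card V) = 2 powr N" if h: "\<exists>d::nat. d > 0 \<and> iso_hypercube V E d \<and> \<kappa> = 2 / real d"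
  proof -
    obtain d :: nat where d: "d > 0" "iso_hypercube V E d" "\<kappa> = 2 / real d" using h by blast
    then obtain f where "bij_betw f V (Pow {1..d})" by (auto simp: iso_hypercube_def)
    then have "card V = card (Pow {1..d})" by (rule bij_betw_same_card)
    then have "card V = 2 ^ d" by (simp add: card_Pow)
    moreover have "N = real d" using d by (simp add: N_def)
    ultimately show ?thesis by (simp add: powr_realpow)
  qed
  show ?thesis using part1 fwd bwd by (auto simp: N_def)
qed


end
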